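(* Let $\mathbf{C}$ be a category of $\mathbf{FI}$ type and $M_\bullet$ a finitely generated $\mathbf{C}$-module over $\mathbb{C}$. Then there exists a set $X$ of objects which is upward closed (if $c\in X$ and $c\leq d$ then $d\in X$) and cofinal (every object is $\leq$ some element of $X$) such that for every $c\in X$ and $d\geq c$ the induced map of coinvariants $M_c/G_c\to M_d/G_d$ is an isomorphism. More generally, for every free $\mathbf{C}$-module $F_\bullet$ the coinvariants of $F\otimes M$ stabilize in the same sense; in particular the spaces $\mathrm{Hom}_{G_c}(F_c,M_c)$ stabilize in the same sense.
   Context: A category $\mathbf{C}$ is of $\mathbf{FI}$ type if: (1) all Hom-sets are finite; (2) every morphism is a monomorphism and every endomorphism is an isomorphism; (3) for all objects $c,d$ the group $G_d=\mathrm{Aut}_{\mathbf{C}}(d)$ acts transitively on $\mathrm{Hom}_{\mathbf{C}}(c,d)$; (4) for every $d$ only finitely many isomorphism classes of $c$ have $\mathrm{Hom}(c,d)\neq\emptyset$; (5) every pair $c_1\to d\leftarrow c_2$ has a pullback, and every pair $f_i:p\to c_i$ has a weak push-out, i.e. a commutative pullback square $g_i:c_i\to d$ such that for every other pullback square $h_i:c_i\to z$ with $h_1f_1=h_2f_2$ there is a unique $h:d\to z$ with $hg_i=h_i$. Write $c\leq d$ if $\mathrm{Hom}(c,d)\neq\emptyset$; $G_c=\mathrm{Aut}(c)$. A $\mathbf{C}$-module is a functor to complex vector spaces; finitely generated means some finite set of elements lies in no proper submodule. For any $\mathbf{C}$-module the coinvariants $M_c/G_c$ form a $\mathbf{C}$-module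 (the map $M_c/G_c\to M_d/G_d$ is independent of the chosen morphism $c\to d$). For a finite-dimensional $G_c$-representation $V$, $\mathrm{Ind}_c(V)$ is $d\mapsto\mathbb{C}[\mathrm{Hom}(c,d)]\otimes_{\mathbb{C}[G_c]}V$; a free module is a finite direct sum of these. Tensor products are pointwise. The spaces $\mathrm{Hom}_{G_c}(F_c,M_c)$ are identified with $(F^*_c\otimes M_c)/G_c$, where $F^*=\bigoplus\mathrm{Ind}_{c_i}(V_i^* )$ for $F=\bigoplus\mathrm{Ind}_{c_i}(V_i)$. *)

theory Defs
  imports Complex_Main "HOL-Library.Function_Algebras"
begin

record ('o, 'm) cat =
  Ob   :: "'o set"
  Mor  :: "'m set"
  Dom  :: "'m \<Rightarrow> 'o"
  Cod  :: "'m \<Rightarrow> 'o"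
  Comp :: "'m \<Rightarrow> 'm \<Rightarrow> 'm"   (* Comp C g f  =  g \<circ> f  (first f, then g) *)
  Idm  :: "'o \<Rightarrow> 'm"

definition Hom :: "('o, 'm) cat \<Rightarrow> 'o \<Rightarrow> 'o \<Rightarrow> 'm set" where
  "Hom C c d = {f \<in> Mor C. Dom C f = c \<and> Cod C f = d}"

definition is_category :: "('o, 'm) cat \<Rightarrow> bool" where
  "is_category C \<longleftrightarrow>
     (\<forall>f \<in> Mor C. Dom C f \<in> Ob C \<and> Cod C f \<in> Ob C) \<and>
     (\<forall>c \<in> Ob C. Idm C c \<in> Hom C c c) \<and>
     (\<forall>f \<in> Mor C. \<forall>g \<in> Mor C. Cod C f = Dom C g \<longrightarrow> Comp C g f \<in> Hom C (Dom C f) (Cod C g)) \<and>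
     (\<forall>f \<in> Mor C. \<forall>g \<in> Mor C. \<forall>h \<in> Mor C. Cod C f = Dom C g \<and> Cod C g = Dom C h \<longrightarrow>
          Comp C h (Comp C g f) = Comp C (Comp C h g) f) \<and>
     (\<forall>f \<in> Mor C. Comp C f (Idm C (Dom C f)) = f \<and> Comp C (Idm C (Cod C f)) f = f)"

text \<open>Automorphism group \<open>G_d = Aut(d)\<close> (as a set of morphisms, group law \<open>Comp C\<close>).\<close>
definition Aut :: "('o, 'm) cat \<Rightarrow> 'o \<Rightarrow> 'm set" where
  "Aut C d = {g \<in> Hom C d d. \<exists>h \<in> Hom C d d. Comp C h g = Idm C d \<and> Comp C g h = Idm C d}"

definition iso_obj :: "('o, 'm) cat \<Rightarrow> 'o \<Rightarrow> 'o \<Rightarrow> bool" where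
  "iso_obj C c c' \<longleftrightarrow> (\<exists>f \<in> Hom C c c'. \<exists>g \<in> Hom C c' c. Comp C g f = Idm C c \<and> Comp C f g = Idm C c')"

definition cle :: "('o, 'm) cat \<Rightarrow> 'o \<Rightarrow> 'o \<Rightarrow> bool" where
  "cle C c d \<longleftrightarrow> Hom C c d \<noteq> {}"

definition pullback_square :: "('o, 'm) cat \<Rightarrow> 'm \<Rightarrow> 'm \<Rightarrow> 'm \<Rightarrow> 'm \<Rightarrow> bool" where
  "pullback_square C f1 f2 g1 g2 \<longleftrightarrow>
     Comp C g1 f1 = Comp C g2 f2 \<and>
     (\<forall>q \<in> Ob C. \<forall>q1 \<in> Hom C q (Cod C f1). \<forall>q2 \<in> Hom C q (Cod C f2).
        Comp C g1 q1 = Comp C g2 q2 \<longrightarrow>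
        (\<exists>!u. u \<in> Hom C q (Dom C f1) \<and> Comp C f1 u = q1 \<and> Comp C f2 u = q2))"

definition FI_type :: "('o, 'm) cat \<Rightarrow> bool" where
  "FI_type C \<longleftrightarrow>
     is_category C \<and>
     \<comment> \<open>(1) finite Hom-sets\<close>
     (\<forall>c \<in> Ob C. \<forall>d \<in> Ob C. finite (Hom C c d)) \<and>
     \<comment> \<open>(2) every morphism is a monomorphism, every endomorphism is an isomorphism\<close>
     (\<forall>f \<in> Mor C. \<forall>g \<in> Mor C. \<forall>h \<in> Mor C.
        Cod C g = Dom C f \<and> Cod C h = Dom C f \<and> Dom C g = Dom C h \<and> Comp C f g = Comp C f h \<longrightarrow> g = h) \<and>
     (\<forall>c \<in> Ob C. Hom C c c \<subseteq> Aut C c) \<and>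
     \<comment> \<open>(3) \<open>G_d\<close> acts transitively on \<open>Hom(c,d)\<close>\<close>
     (\<forall>c \<in> Ob C. \<forall>d \<in> Ob C. \<forall>f \<in> Hom C c d. \<forall>f' \<in> Hom C c d. \<exists>g \<in> Aut C d. Comp C g f = f') \<and>
     \<comment> \<open>(4) finitely many isomorphism classes below each object\<close>
     (\<forall>d \<in> Ob C. \<exists>S. finite S \<and> S \<subseteq> Ob C \<and> (\<forall>c \<in> Ob C. cle C c d \<longrightarrow> (\<exists>s \<in> S. iso_obj C c s))) \<and>
     \<comment> \<open>(5a) pullbacks\<close>
     (\<forall>c1 \<in> Ob C. \<forall>c2 \<in> Ob C. \<forall>d \<in> Ob C. \<forall>f1 \<in> Hom C c1 d. \<forall>f2 \<in> Hom C c2 d.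
        \<exists>p \<in> Ob C. \<exists>p1 \<in> Hom C p c1. \<exists>p2 \<in> Hom C p c2. pullback_square C p1 p2 f1 f2) \<and>
     \<comment> \<open>(5b) weak push-outs\<close>
     (\<forall>p \<in> Ob C. \<forall>c1 \<in> Ob C. \<forall>c2 \<in> Ob C. \<forall>f1 \<in> Hom C p c1. \<forall>f2 \<in> Hom C p c2.
        \<exists>d \<in> Ob C. \<exists>g1 \<in> Hom C c1 d. \<exists>g2 \<in> Hom C c2 d.
          pullback_square C f1 f2 g1 g2 \<and>
          (\<forall>z \<in> Ob C. \<forall>h1 \<in> Hom C c1 z. \<forall>h2 \<in> Hom C c2 z.
             pullback_square C f1 f2 h1 h2 \<longrightarrow>
             (\<exists>!h. h \<in> Hom C d z \<and> Comp C h g1 = h1 \<and> Comp C h g2 = h2)))"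

text \<open>A \<open>C\<close>-module: each \<open>M c\<close> is a complex subspace of an ambient complex vector space
  (scalar multiplication \<open>sc\<close>), and \<open>act f\<close> is a linear map \<open>M (Dom f) \<rightarrow> M (Cod f)\<close>, functorially.\<close>
definition C_module :: "('o, 'm) cat \<Rightarrow> (complex \<Rightarrow> 'v::ab_group_add \<Rightarrow> 'v) \<Rightarrow> ('o \<Rightarrow> 'v set) \<Rightarrow> ('m \<Rightarrow> 'v \<Rightarrow> 'v) \<Rightarrow> bool" where
  "C_module C sc M act \<longleftrightarrow>
     (\<forall>c \<in> Ob C. module.subspace sc (M c)) \<and>
     (\<forall>f \<in> Mor C. \<forall>x \<in> M (Dom C f). act f x \<in> M (Cod C f)) \<and>
     (\<forall>f \<in> Mor C. \<forall>x \<in> M (Dom C f). \<forall>y \<in> M (Dom C f). act f (x + y) = act f x + act f y) \<and>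
     (\<forall>f \<in> Mor C. \<forall>r. \<forall>x \<in> M (Dom C f). act f (sc r x) = sc r (act f x)) \<and>
     (\<forall>c \<in> Ob C. \<forall>x \<in> M c. act (Idm C c) x = x) \<and>
     (\<forall>f \<in> Mor C. \<forall>g \<in> Mor C. Cod C f = Dom C g \<longrightarrow>
        (\<forall>x \<in> M (Dom C f). act (Comp C g f) x = act g (act f x)))"

definition submodule :: "('o, 'm) cat \<Rightarrow> (complex \<Rightarrow> 'v::ab_group_add \<Rightarrow> 'v) \<Rightarrow> ('o \<Rightarrow> 'v set) \<Rightarrow> ('m \<Rightarrow> 'v \<Rightarrow> 'v) \<Rightarrow> ('o \<Rightarrow> 'v set) \<Rightarrow> bool" where
  "submodule C sc M act N \<longleftrightarrow>
     (\<forall>c \<in> Ob C. module.subspace sc (N c) \<and> N c \<subseteq> M c) \<and>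
     (\<forall>f \<in> Mor C. \<forall>x \<in> N (Dom C f). act f x \<in> N (Cod C f))"

definition fin_gen :: "('o, 'm) cat \<Rightarrow> (complex \<Rightarrow> 'v::ab_group_add \<Rightarrow> 'v) \<Rightarrow> ('o \<Rightarrow> 'v set) \<Rightarrow> ('m \<Rightarrow> 'v \<Rightarrow> 'v) \<Rightarrow> bool" where
  "fin_gen C sc M act \<longleftrightarrow>
     (\<exists>E. finite E \<and> E \<subseteq> Sigma (Ob C) M \<and>
        (\<forall>N. submodule C sc M act N \<and> (\<forall>(c, x) \<in> E. x \<in> N c) \<longrightarrow> (\<forall>c \<in> Ob C. N c = M c)))"

text \<open>We treat a module given by a presentation: at each object \<open>d\<close> the space is \<open>A d / R d\<close>
  (for an honest module \<open>R d = {}\<close>), with \<open>act\<close> the action.  The coinvariants at \<open>d\<close> are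
  \<open>A d / coinv_ker d\<close>, where \<open>coinv_ker d\<close> is the span of \<open>R d\<close> and all \<open>g\<cdot>a - a\<close>, \<open>g \<in> G_d\<close>.\<close>
definition coinv_ker :: "('o, 'm) cat \<Rightarrow> (complex \<Rightarrow> 'w::ab_group_add \<Rightarrow> 'w) \<Rightarrow> ('o \<Rightarrow> 'w set) \<Rightarrow> ('o \<Rightarrow> 'w set)
    \<Rightarrow> ('m \<Rightarrow> 'w \<Rightarrow> 'w) \<Rightarrow> 'o \<Rightarrow> 'w set" where
  "coinv_ker C sc A R act d =
     module.span sc (R d \<union> {act g a - a | g a. g \<in> Aut C d \<and> a \<in> A d})"

text \<open>The map of coinvariants \<open>A c / coinv_ker c \<rightarrow> A d / coinv_ker d\<close> induced by \<open>f : c \<rightarrow> d\<close>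
  is bijective (surjective and injective), written out on representatives.\<close>
definition coinv_iso :: "('o, 'm) cat \<Rightarrow> (complex \<Rightarrow> 'w::ab_group_add \<Rightarrow> 'w) \<Rightarrow> ('o \<Rightarrow> 'w set) \<Rightarrow> ('o \<Rightarrow> 'w set)
    \<Rightarrow> ('m \<Rightarrow> 'w \<Rightarrow> 'w) \<Rightarrow> 'o \<Rightarrow> 'o \<Rightarrow> 'm \<Rightarrow> bool" where
  "coinv_iso C sc A R act c d f \<longleftrightarrow>
     (\<forall>y \<in> A d. \<exists>x \<in> A c. y - act f x \<in> coinv_ker C sc A R act d) \<and>
     (\<forall>x \<in> A c. act f x \<in> coinv_ker C sc A R act d \<longrightarrow> x \<in> coinv_ker C sc A R act c)"

definition coinv_stabilize :: "('o, 'm) cat \<Rightarrow> (complex \<Rightarrow> 'w::ab_group_add \<Rightarrow> 'w) \<Rightarrow> ('o \<Rightarrow> 'w set) \<Rightarrow> ('o \<Rightarrow> 'w set)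
    \<Rightarrow> ('m \<Rightarrow> 'w \<Rightarrow> 'w) \<Rightarrow> bool" where
  "coinv_stabilize C sc A R act \<longleftrightarrow>
     (\<exists>X. X \<subseteq> Ob C \<and>
        (\<forall>c \<in> X. \<forall>d \<in> Ob C. cle C c d \<longrightarrow> d \<in> X) \<and>
        (\<forall>c \<in> Ob C. \<exists>x \<in> X. cle C c x) \<and>
        (\<forall>c \<in> X. \<forall>d \<in> Ob C. \<forall>f \<in> Hom C c d. coinv_iso C sc A R act c d f))"

definition is_rep :: "('o, 'm) cat \<Rightarrow> 'o \<Rightarrow> nat \<Rightarrow> ('m \<Rightarrow> nat \<Rightarrow> nat \<Rightarrow> complex) \<Rightarrow> bool" where
  "is_rep C c n \<rho> \<longleftrightarrow>
     (\<forall>i < n. \<forall>j < n. \<rho> (Idm C c) i j = (if i = j then 1 else 0)) \<and>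
     (\<forall>g \<in> Aut C c. \<forall>h \<in> Aut C c. \<forall>i < n. \<forall>j < n.
        \<rho> (Comp C g h) i j = (\<Sum>l < n. \<rho> g i l * \<rho> h l j))"

text \<open>Data of a free module \<open>F = \<Oplus>_{k<N} Ind_{cs k}(V_k)\<close>, \<open>V_k = \<complex>^{ns k}\<close> with action \<open>\<rho> k\<close>.\<close>
definition free_data :: "('o, 'm) cat \<Rightarrow> nat \<Rightarrow> (nat \<Rightarrow> 'o) \<Rightarrow> (nat \<Rightarrow> nat) \<Rightarrow> (nat \<Rightarrow> 'm \<Rightarrow> nat \<Rightarrow> nat \<Rightarrow> complex) \<Rightarrow> bool" where
  "free_data C N cs ns \<rho> \<longleftrightarrow> (\<forall>k < N. cs k \<in> Ob C \<and> is_rep C (cs k) (ns k) (\<rho> k))"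

definition fscale :: "(complex \<Rightarrow> 'v \<Rightarrow> 'v) \<Rightarrow> complex \<Rightarrow> ('a \<Rightarrow> 'v) \<Rightarrow> ('a \<Rightarrow> 'v)" where
  "fscale sc r \<phi> = (\<lambda>x. sc r (\<phi> x))"

definition single :: "'a \<Rightarrow> 'v::zero \<Rightarrow> ('a \<Rightarrow> 'v)" where
  "single a v = (\<lambda>x. if x = a then v else 0)"

text \<open>\<open>(F \<otimes> M)_d = \<Oplus>_k (\<complex>[Hom(c_k,d)] \<otimes>_{\<complex>[G_{c_k}]} \<complex>^{n_k}) \<otimes> M_d\<close> is presented as the quotient of
  \<open>tens_A d = \<Oplus>_k \<complex>[Hom(c_k,d)] \<otimes> \<complex>^{n_k} \<otimes> M_d\<close> (functions \<open>(k,f,i) \<mapsto> M_d\<close>, where \<open>\<phi>(k,f,i)\<close> is the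
  coefficient of \<open>f \<otimes> e_i\<close>) by the relations \<open>tens_R d\<close>: \<open>(f\<circ>g) \<otimes> e_j \<otimes> m = f \<otimes> \<rho>(g) e_j \<otimes> m\<close>.\<close>
definition tens_A :: "('o, 'm) cat \<Rightarrow> nat \<Rightarrow> (nat \<Rightarrow> 'o) \<Rightarrow> (nat \<Rightarrow> nat) \<Rightarrow> ('o \<Rightarrow> 'v::zero set)
    \<Rightarrow> 'o \<Rightarrow> (nat \<times> 'm \<times> nat \<Rightarrow> 'v) set" where
  "tens_A C N cs ns M d =
     {\<phi>. (\<forall>k f i. \<phi> (k, f, i) \<noteq> 0 \<longrightarrow> k < N \<and> f \<in> Hom C (cs k) d \<and> i < ns k) \<and>
         (\<forall>k < N. \<forall>f \<in> Hom C (cs k) d. \<forall>i < ns k. \<phi> (k, f, i) \<in> M d)}"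

definition tens_R :: "('o, 'm) cat \<Rightarrow> (complex \<Rightarrow> 'v::ab_group_add \<Rightarrow> 'v) \<Rightarrow> nat \<Rightarrow> (nat \<Rightarrow> 'o) \<Rightarrow> (nat \<Rightarrow> nat)
    \<Rightarrow> (nat \<Rightarrow> 'm \<Rightarrow> nat \<Rightarrow> nat \<Rightarrow> complex) \<Rightarrow> ('o \<Rightarrow> 'v set) \<Rightarrow> 'o \<Rightarrow> (nat \<times> 'm \<times> nat \<Rightarrow> 'v) set" where
  "tens_R C sc N cs ns \<rho> M d =
     {single (k, Comp C f g, j) m - (\<Sum>i < ns k. single (k, f, i) (sc (\<rho> k g i j) m)) | k f g j m.
        k < N \<and> f \<in> Hom C (cs k) d \<and> g \<in> Aut C (cs k) \<and> j < ns k \<and> m \<in> M d}"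

text \<open>Action of \<open>h : d \<rightarrow> d'\<close> on \<open>F \<otimes> M\<close>: \<open>f \<otimes> e_i \<otimes> m \<mapsto> (h \<circ> f) \<otimes> e_i \<otimes> h\<cdot>m\<close>.\<close>
definition tens_act :: "('o, 'm) cat \<Rightarrow> nat \<Rightarrow> (nat \<Rightarrow> 'o) \<Rightarrow> (nat \<Rightarrow> nat) \<Rightarrow> ('m \<Rightarrow> 'v::comm_monoid_add \<Rightarrow> 'v)
    \<Rightarrow> 'm \<Rightarrow> (nat \<times> 'm \<times> nat \<Rightarrow> 'v) \<Rightarrow> (nat \<times> 'm \<times> nat \<Rightarrow> 'v)" where
  "tens_act C N cs ns act h \<phi> =
     (\<lambda>(k, f', i). if k < N \<and> i < ns k
        then (\<Sum>f \<in> {f \<in> Hom C (cs k) (Dom C h). Comp C h f = f'}. act h (\<phi> (k, f, i)))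
        else 0)"

end

theory Submission
  imports Defs
begin

context vector_space
begin

lemma sub_eq_dim:
  assumes "subspace S" "subspace T" "S \<subseteq> T" "T \<subseteq> span W" "finite W" "dim T \<le> dim S"
  shows "T = S"
proof (rule ccontr)
  assume ne: "T \<noteq> S"
  then obtain t where t: "t \<in> T" "t \<notin> S" using assms(3) by blast
  obtain B where B: "B \<subseteq> S" "independent B" "S \<subseteq> span B" "card B = dim S"
    using basis_exists by blast
  obtain BT where BT: "BT \<subseteq> T" "independent BT" "T \<subseteq> span BT" "card BT = dim T"
    using basis_exists by blast
  have "span B \<subseteq> S" using B(1) assms(1) by (simp add: span_minimal)
  hence tB: "t \<notin> span B" using t by blast
  have fBT: "finite BT \<and> card BT \<le> card W"
    using independent_span_bound[OF assms(5) BT(2)] BT(1) assms(4) by blast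
  have ind: "independent (insert t B)" using independent_insertI[OF tB B(2)] .
  have h: "insert t B \<subseteq> span BT" using BT(3) B(1) assms(3) t(1) by blast
  have fb: "finite BT" using fBT by simp
  have "finite (insert t B) \<and> card (insert t B) \<le> card BT"
    by (rule independent_span_bound[OF fb ind h])
  moreover have "t \<notin> B" using tB span_base by blast
  ultimately show False using B(4) BT(4) assms(6) by (auto simp: card_insert_disjoint)
qed

end

definition fsc :: "complex \<Rightarrow> ('i \<Rightarrow> complex) \<Rightarrow> ('i \<Rightarrow> complex)" where
  "fsc r a = (\<lambda>i. r * a i)"

interpretation fv: vector_space fsc
  by unfold_locales (auto simp: fsc_def fun_eq_iff algebra_simps)


lemma FI_cat: "FI_type C \<Longrightarrow> is_category C"
  by (simp add: FI_type_def)

lemma Hom_D: "is_category C \<Longrightarrow> f \<in> Hom C c d \<Longrightarrow> f \<in> Mor C \<and> Dom C f = c \<and> Cod C f = d \<and> c \<in> Ob C \<and> d \<in> Ob C"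
  by (auto simp: Hom_def is_category_def)

lemma Mor_Hom: "f \<in> Mor C \<Longrightarrow> f \<in> Hom C (Dom C f) (Cod C f)"
  by (simp add: Hom_def)

lemma comp_Hom: "is_category C \<Longrightarrow> f \<in> Hom C a b \<Longrightarrow> g \<in> Hom C b c \<Longrightarrow> Comp C g f \<in> Hom C a c"
  unfolding is_category_def Hom_def by auto

lemma comp_assoc: "is_category C \<Longrightarrow> f \<in> Hom C a b \<Longrightarrow> g \<in> Hom C b c \<Longrightarrow> h \<in> Hom C c d
   \<Longrightarrow> Comp C h (Comp C g f) = Comp C (Comp C h g) f"
  unfolding is_category_def Hom_def by auto

lemma id_Hom: "is_category C \<Longrightarrow> c \<in> Ob C \<Longrightarrow> Idm C c \<in> Hom C c c"
  unfolding is_category_def by auto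

lemma comp_id_r: "is_category C \<Longrightarrow> f \<in> Hom C a b \<Longrightarrow> Comp C f (Idm C a) = f"
  unfolding is_category_def Hom_def by auto

lemma comp_id_l: "is_category C \<Longrightarrow> f \<in> Hom C a b \<Longrightarrow> Comp C (Idm C b) f = f"
  unfolding is_category_def Hom_def by auto

lemma Aut_Hom: "Aut C d \<subseteq> Hom C d d"
  by (auto simp: Aut_def)

lemma FI_fin0: assumes "FI_type C" shows "\<forall>c\<in>Ob C. \<forall>d\<in>Ob C. finite (Hom C c d)"
  using assms unfolding FI_type_def by (elim conjE) assumption

lemma FI_mono0: assumes "FI_type C" shows "\<forall>f\<in>Mor C. \<forall>g\<in>Mor C. \<forall>h\<in>Mor C.
        Cod C g = Dom C f \<and> Cod C h = Dom C f \<and> Dom C g = Dom C h \<and> Comp C f g = Comp C f h \<longrightarrow> g = h"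
  using assms unfolding FI_type_def by (elim conjE) assumption

lemma FI_trans0: assumes "FI_type C" shows "\<forall>c \<in> Ob C. \<forall>d \<in> Ob C. \<forall>f \<in> Hom C c d. \<forall>f' \<in> Hom C c d. \<exists>g \<in> Aut C d. Comp C g f = f'"
  using assms unfolding FI_type_def by (elim conjE) assumption

lemma FI_isos0: assumes "FI_type C" shows "\<forall>d \<in> Ob C. \<exists>S. finite S \<and> S \<subseteq> Ob C \<and> (\<forall>c \<in> Ob C. cle C c d \<longrightarrow> (\<exists>s \<in> S. iso_obj C c s))"
  using assms unfolding FI_type_def by (elim conjE) assumption

lemma FI_pb0: assumes "FI_type C" shows "\<forall>c1 \<in> Ob C. \<forall>c2 \<in> Ob C. \<forall>d \<in> Ob C. \<forall>f1 \<in> Hom C c1 d. \<forall>f2 \<in> Hom C c2 d.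
        \<exists>p \<in> Ob C. \<exists>p1 \<in> Hom C p c1. \<exists>p2 \<in> Hom C p c2. pullback_square C p1 p2 f1 f2"
  using assms unfolding FI_type_def by (elim conjE) assumption

lemma FI_po0: assumes "FI_type C" shows "\<forall>p \<in> Ob C. \<forall>c1 \<in> Ob C. \<forall>c2 \<in> Ob C. \<forall>f1 \<in> Hom C p c1. \<forall>f2 \<in> Hom C p c2.
        \<exists>d \<in> Ob C. \<exists>g1 \<in> Hom C c1 d. \<exists>g2 \<in> Hom C c2 d.
          pullback_square C f1 f2 g1 g2 \<and>
          (\<forall>z \<in> Ob C. \<forall>h1 \<in> Hom C c1 z. \<forall>h2 \<in> Hom C c2 z.
             pullback_square C f1 f2 h1 h2 \<longrightarrow>
             (\<exists>!h. h \<in> Hom C d z \<and> Comp C h g1 = h1 \<and> Comp C h g2 = h2))"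
  using assms unfolding FI_type_def by (elim conjE) assumption

lemma Aut_HomI: "g \<in> Aut C d \<Longrightarrow> g \<in> Hom C d d"
  by (auto simp: Aut_def)

lemma FI_trans: "FI_type C \<Longrightarrow> f \<in> Hom C c d \<Longrightarrow> f' \<in> Hom C c d \<Longrightarrow> \<exists>g \<in> Aut C d. Comp C g f = f'"
proof -
  assume fi: "FI_type C" and f: "f \<in> Hom C c d" and f': "f' \<in> Hom C c d"
  have "c \<in> Ob C" "d \<in> Ob C" using Hom_D[OF FI_cat[OF fi] f] by auto
  thus ?thesis using FI_trans0[OF fi] f f' by blast
qed

lemma FI_mono: "FI_type C \<Longrightarrow> g \<in> Hom C a b \<Longrightarrow> h \<in> Hom C a b \<Longrightarrow> f \<in> Hom C b c
   \<Longrightarrow> Comp C f g = Comp C f h \<Longrightarrow> g = h"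
proof -
  assume fi: "FI_type C" and g: "g \<in> Hom C a b" and h: "h \<in> Hom C a b" and f: "f \<in> Hom C b c" and e: "Comp C f g = Comp C f h"
  show "g = h" using FI_mono0[OF fi, rule_format, of f g h] g h f e unfolding Hom_def by auto
qed

lemma FI_fin: "FI_type C \<Longrightarrow> c \<in> Ob C \<Longrightarrow> d \<in> Ob C \<Longrightarrow> finite (Hom C c d)"
  using FI_fin0 by blast

lemma cle_refl: "is_category C \<Longrightarrow> c \<in> Ob C \<Longrightarrow> cle C c c"
  using id_Hom by (fastforce simp: cle_def)

lemma cle_trans: "is_category C \<Longrightarrow> cle C a b \<Longrightarrow> cle C b c \<Longrightarrow> cle C a c"
  using comp_Hom by (fastforce simp: cle_def)

locale pmod = vector_space scale
  for scale :: "complex \<Rightarrow> 'w::ab_group_add \<Rightarrow> 'w" (infixr "*s" 75) +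
  fixes C :: "('o, 'm) cat" and A R :: "'o \<Rightarrow> 'w set" and act :: "'m \<Rightarrow> 'w \<Rightarrow> 'w"
    and G :: "('o \<times> 'w) set"
  assumes FI: "FI_type C"
    and A_sub: "c \<in> Ob C \<Longrightarrow> subspace (A c)"
    and R_sub: "c \<in> Ob C \<Longrightarrow> R c \<subseteq> A c"
    and act_A: "f \<in> Hom C c d \<Longrightarrow> x \<in> A c \<Longrightarrow> act f x \<in> A d"
    and act_add: "f \<in> Hom C c d \<Longrightarrow> x \<in> A c \<Longrightarrow> y \<in> A c \<Longrightarrow> act f (x + y) = act f x + act f y"
    and act_scale: "f \<in> Hom C c d \<Longrightarrow> x \<in> A c \<Longrightarrow> act f (r *s x) = r *s act f x"
    and act_R: "f \<in> Hom C c d \<Longrightarrow> x \<in> R c \<Longrightarrow> act f x \<in> span (R d)"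
    and act_comp: "f \<in> Hom C a b \<Longrightarrow> g \<in> Hom C b c \<Longrightarrow> x \<in> A a \<Longrightarrow> act (Comp C g f) x = act g (act f x)"
    and G_fin: "finite G"
    and G_A: "(z, x) \<in> G \<Longrightarrow> z \<in> Ob C \<and> x \<in> A z"
    and gen: "d \<in> Ob C \<Longrightarrow> A d \<subseteq> span {act u x | u x z. (z, x) \<in> G \<and> u \<in> Hom C z d}"
begin

lemmas cat = FI_cat[OF FI]

definition ker where "ker d = coinv_ker C scale A R act d"

lemma act_0: "f \<in> Hom C c d \<Longrightarrow> c \<in> Ob C \<Longrightarrow> act f 0 = 0"
proof -
  assume f: "f \<in> Hom C c d" and c: "c \<in> Ob C"
  have "0 \<in> A c" using A_sub[OF c] subspace_0 by blast
  hence "act f (0 + 0) = act f 0 + act f 0" using act_add[OF f] by blast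
  thus ?thesis by simp
qed

lemma act_diff: "f \<in> Hom C c d \<Longrightarrow> x \<in> A c \<Longrightarrow> y \<in> A c \<Longrightarrow> act f (x - y) = act f x - act f y"
proof -
  assume f: "f \<in> Hom C c d" and x: "x \<in> A c" and y: "y \<in> A c"
  have c: "c \<in> Ob C" using Hom_D[OF cat f] by simp
  have "x - y \<in> A c" using A_sub[OF c] subspace_diff x y by blast
  hence "act f (x - y + y) = act f (x - y) + act f y" using act_add[OF f _ y] by blast
  thus ?thesis by (simp add: algebra_simps)
qed

lemma act_sum: "f \<in> Hom C c d \<Longrightarrow> (\<And>i. i \<in> I \<Longrightarrow> h i \<in> A c) \<Longrightarrow> act f (sum h I) = (\<Sum>i\<in>I. act f (h i))"
proof (induction I rule: infinite_finite_induct)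
  case (infinite I)
  have c: "c \<in> Ob C" using Hom_D[OF cat infinite(2)] by simp
  show ?case using act_0[OF infinite(2) c] infinite(1) by simp
next
  case empty
  have c: "c \<in> Ob C" using Hom_D[OF cat empty(1)] by simp
  show ?case using act_0[OF empty(1) c] by simp
next
  case (insert i I)
  have c: "c \<in> Ob C" using Hom_D[OF cat insert(4)] by simp
  have hI: "\<And>j. j \<in> I \<Longrightarrow> h j \<in> A c" using insert(5) by simp
  have s: "sum h I \<in> A c" using subspace_sum[OF A_sub[OF c] hI] .
  have hi: "h i \<in> A c" using insert(5) by simp
  have "act f (sum h (insert i I)) = act f (h i + sum h I)" using insert(1,2) by simp
  also have "\<dots> = act f (h i) + act f (sum h I)" using act_add[OF insert(4) hi s] .
  also have "act f (sum h I) = (\<Sum>j\<in>I. act f (h j))" using insert(3)[OF insert(4) hI] .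
  finally show ?case using insert(1,2) by simp
qed

lemma ker_sub: "d \<in> Ob C \<Longrightarrow> subspace (ker d)"
  by (simp add: ker_def coinv_ker_def)

lemma ker_A: "d \<in> Ob C \<Longrightarrow> ker d \<subseteq> A d"
  unfolding ker_def coinv_ker_def
proof (rule span_minimal[OF _ A_sub])
  assume d: "d \<in> Ob C"
  have "act g a - a \<in> A d" if "g \<in> Aut C d" "a \<in> A d" for g a
    using act_A[OF Aut_HomI[OF that(1)] that(2)] that A_sub[OF d] subspace_diff by blast
  thus "R d \<union> {act g a - a |g a. g \<in> Aut C d \<and> a \<in> A d} \<subseteq> A d" using R_sub[OF d] by blast
qed

lemma R_ker: "R d \<subseteq> ker d"
  unfolding ker_def coinv_ker_def using span_superset by blast

lemma spanR_ker: "span (R d) \<subseteq> ker d"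
  unfolding ker_def coinv_ker_def by (rule span_mono) blast

lemma aut_ker: "g \<in> Aut C d \<Longrightarrow> a \<in> A d \<Longrightarrow> act g a - a \<in> ker d"
  unfolding ker_def coinv_ker_def by (rule span_base) blast

lemma K3: "f \<in> Hom C c d \<Longrightarrow> f' \<in> Hom C c d \<Longrightarrow> x \<in> A c \<Longrightarrow> act f' x - act f x \<in> ker d"
proof -
  assume f: "f \<in> Hom C c d" and f': "f' \<in> Hom C c d" and x: "x \<in> A c"
  obtain g where g: "g \<in> Aut C d" "Comp C g f = f'" using FI_trans[OF FI f f'] by blast
  have "act f' x = act g (act f x)" using act_comp[OF f Aut_HomI[OF g(1)] x] g(2) by simp
  thus ?thesis using aut_ker[OF g(1) act_A[OF f x]] by simp
qed

lemma K2: "f \<in> Hom C c d \<Longrightarrow> x \<in> ker c \<Longrightarrow> act f x \<in> ker d"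
proof -
  assume f: "f \<in> Hom C c d" and x: "x \<in> ker c"
  have c: "c \<in> Ob C" and d: "d \<in> Ob C" using Hom_D[OF cat f] by auto
  let ?T = "{x \<in> A c. act f x \<in> ker d}"
  have sT: "subspace ?T"
  proof (rule subspaceI)
    show "0 \<in> ?T" using act_0[OF f c] A_sub[OF c] ker_sub[OF d] subspace_0 by auto
    show "x + y \<in> ?T" if "x \<in> ?T" "y \<in> ?T" for x y
      using that act_add[OF f] A_sub[OF c] ker_sub[OF d] subspace_add by auto
    show "r *s x \<in> ?T" if "x \<in> ?T" for r x
      using that act_scale[OF f] A_sub[OF c] ker_sub[OF d] subspace_scale by auto
  qed
  have gens: "R c \<union> {act g a - a |g a. g \<in> Aut C c \<and> a \<in> A c} \<subseteq> ?T"
  proof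
    fix y assume "y \<in> R c \<union> {act g a - a |g a. g \<in> Aut C c \<and> a \<in> A c}"
    then consider "y \<in> R c" | g a where "y = act g a - a" "g \<in> Aut C c" "a \<in> A c" by blast
    thus "y \<in> ?T"
    proof cases
      case 1 thus ?thesis using R_sub[OF c] act_R[OF f] spanR_ker by blast
    next
      case 2
      have gH: "g \<in> Hom C c c" using Aut_HomI[OF 2(2)] .
      have ga: "act g a \<in> A c" using act_A[OF gH 2(3)] .
      have yA: "y \<in> A c" using 2 ga A_sub[OF c] subspace_diff by blast
      have "act f y = act f (act g a) - act f a" using act_diff[OF f ga 2(3)] 2 by simp
      also have "act f (act g a) = act (Comp C f g) a" using act_comp[OF gH f 2(3)] by simp
      finally have "act f y = act (Comp C f g) a - act f a" .
      moreover have "act (Comp C f g) a - act f a \<in> ker d"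
        using K3[OF f comp_Hom[OF cat gH f] 2(3)] .
      ultimately show ?thesis using yA by simp
    qed
  qed
  have kc: "ker c = span (R c \<union> {act g a - a |g a. g \<in> Aut C c \<and> a \<in> A c})"
    by (simp add: ker_def coinv_ker_def)
  have "ker c \<subseteq> ?T" unfolding kc by (rule span_minimal[OF gens sT])
  thus ?thesis using x by blast
qed

end


context pmod
begin

definition S where "S d = {p \<in> G. cle C (fst p) d}"
definition v where "v d p = act (SOME u. u \<in> Hom C (fst p) d) (snd p)"
definition comb where "comb d a = (\<Sum>p\<in>S d. a p *s v d p)"
definition Rel where "Rel d = {a. (\<forall>p. p \<notin> G \<longrightarrow> a p = 0) \<and> comb d a \<in> ker d}"

lemma S_fin: "finite (S d)"
  using G_fin by (simp add: S_def)

lemma S_sub: "S d \<subseteq> G" by (auto simp: S_def)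

lemma v_prop:
  assumes p: "p \<in> S d"
  shows "v d p \<in> A d" "u \<in> Hom C (fst p) d \<Longrightarrow> act u (snd p) - v d p \<in> ker d"
proof -
  obtain z x where zx: "p = (z, x)" by (cases p)
  have pG: "(z, x) \<in> G" and cl: "cle C z d" using p zx by (auto simp: S_def)
  have "\<exists>u. u \<in> Hom C z d" using cl by (auto simp: cle_def)
  hence u0: "(SOME u. u \<in> Hom C z d) \<in> Hom C z d" by (rule someI_ex)
  have xA: "x \<in> A z" using G_A[OF pG] by simp
  show "v d p \<in> A d" unfolding v_def zx using act_A[OF u0 xA] by simp
  show "act u (snd p) - v d p \<in> ker d" if "u \<in> Hom C (fst p) d"
    unfolding v_def zx using K3[OF u0 _ xA] that zx by simp
qed

lemma comb_A: "d \<in> Ob C \<Longrightarrow> comb d a \<in> A d"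
  unfolding comb_def by (rule subspace_sum[OF A_sub]) (auto intro: subspace_scale[OF A_sub] v_prop)

lemma S_mono: "f \<in> Hom C d w \<Longrightarrow> S d \<subseteq> S w"
  unfolding S_def using cle_trans[OF cat] by (auto simp: cle_def)

lemma transfer':
  assumes f: "f \<in> Hom C d w"
  shows "act f (comb d a) - (\<Sum>p\<in>S d. a p *s v w p) \<in> ker w"
proof -
  have d: "d \<in> Ob C" and w: "w \<in> Ob C" using Hom_D[OF cat f] by auto
  have "act f (comb d a) = (\<Sum>p\<in>S d. act f (a p *s v d p))"
    unfolding comb_def by (rule act_sum[OF f]) (auto intro: subspace_scale[OF A_sub[OF d]] v_prop)
  also have "\<dots> = (\<Sum>p\<in>S d. a p *s act f (v d p))"
    by (rule sum.cong) (auto intro: act_scale[OF f] v_prop)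
  finally have e: "act f (comb d a) - (\<Sum>p\<in>S d. a p *s v w p) = (\<Sum>p\<in>S d. a p *s (act f (v d p) - v w p))"
    by (simp add: sum_subtractf scale_right_diff_distrib)
  have "act f (v d p) - v w p \<in> ker w" if p: "p \<in> S d" for p
  proof -
    obtain z x where zx: "p = (z, x)" by (cases p)
    have cl: "cle C z d" using p zx by (auto simp: S_def)
    have "\<exists>u. u \<in> Hom C z d" using cl by (auto simp: cle_def)
    hence u0: "(SOME u. u \<in> Hom C z d) \<in> Hom C z d" by (rule someI_ex)
    have xA: "x \<in> A z" using G_A p zx S_sub by blast
    have "act f (v d p) = act (Comp C f (SOME u. u \<in> Hom C z d)) x"
      unfolding v_def zx using act_comp[OF u0 f xA] by simp
    moreover have "act (Comp C f (SOME u. u \<in> Hom C z d)) x - v w p \<in> ker w"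
      using v_prop(2)[of p w "Comp C f (SOME u. u \<in> Hom C z d)"] S_mono[OF f] p zx comp_Hom[OF cat u0 f] by auto
    ultimately show ?thesis by simp
  qed
  hence "(\<Sum>p\<in>S d. a p *s (act f (v d p) - v w p)) \<in> ker w"
    by (intro subspace_sum[OF ker_sub[OF w]] subspace_scale[OF ker_sub[OF w]])
  thus ?thesis using e by simp
qed

lemma comb_zero: "comb d (\<lambda>_. 0) = 0" by (simp add: comb_def)
lemma comb_add: "comb d (a + b) = comb d a + comb d b"
  by (simp add: comb_def scale_left_distrib sum.distrib)
lemma comb_fsc: "comb d (fsc r a) = r *s comb d a"
  by (simp add: comb_def fsc_def scale_sum_right)

lemma Rel_subspace: "d \<in> Ob C \<Longrightarrow> fv.subspace (Rel d)"
proof (rule fv.subspaceI)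
  assume d: "d \<in> Ob C"
  show "0 \<in> Rel d" using comb_zero[of d] ker_sub[OF d] subspace_0
    by (auto simp: Rel_def zero_fun_def)
  show "x + y \<in> Rel d" if "x \<in> Rel d" "y \<in> Rel d" for x y
    using that ker_sub[OF d] subspace_add comb_add by (auto simp: Rel_def)
  show "fsc c x \<in> Rel d" if "x \<in> Rel d" for c x
    using that ker_sub[OF d] subspace_scale comb_fsc by (auto simp: Rel_def fsc_def)
qed

definition delta where "delta p = (\<lambda>q. if q = p then (1::complex) else 0)"

lemma Rel_span: "Rel d \<subseteq> fv.span (delta ` G)"
proof
  fix a assume a: "a \<in> Rel d"
  have "a = (\<Sum>p\<in>G. fsc (a p) (delta p))"
  proof
    fix q
    have "(\<Sum>p\<in>G. fsc (a p) (delta p)) q = (\<Sum>p\<in>G. a p * delta p q)"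
      by (induction G rule: infinite_finite_induct) (auto simp: fsc_def)
    also have "\<dots> = (if q \<in> G then a q else 0)"
      using G_fin by (simp add: delta_def if_distrib sum.delta cong: if_cong)
    also have "\<dots> = a q" using a by (cases q) (auto simp: Rel_def)
    finally show "a q = (\<Sum>p\<in>G. fsc (a p) (delta p)) q" by simp
  qed
  also have "\<dots> \<in> fv.span (delta ` G)"
    by (intro fv.span_sum fv.span_scale fv.span_base) auto
  finally show "a \<in> fv.span (delta ` G)" .
qed

lemma Rel_mono: "f \<in> Hom C d w \<Longrightarrow> S d = S w \<Longrightarrow> Rel d \<subseteq> Rel w"
proof
  fix a assume f: "f \<in> Hom C d w" and Sdw: "S d = S w" and a: "a \<in> Rel d"
  have d: "d \<in> Ob C" and w: "w \<in> Ob C" using Hom_D[OF cat f] by auto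
  have "act f (comb d a) \<in> ker w" using K2[OF f] a by (auto simp: Rel_def)
  moreover have "act f (comb d a) - comb w a \<in> ker w" using transfer'[OF f, of a] Sdw by (simp add: comb_def)
  ultimately have "act f (comb d a) - (act f (comb d a) - comb w a) \<in> ker w"
    by (rule subspace_diff[OF ker_sub[OF w]])
  hence "comb w a \<in> ker w" by simp
  thus "a \<in> Rel w" using a by (auto simp: Rel_def)
qed

lemma memT: "y \<in> A d \<Longrightarrow> (\<forall>p. p \<notin> G \<longrightarrow> a p = 0) \<Longrightarrow> y - comb d a \<in> ker d
   \<Longrightarrow> y \<in> {x \<in> A d. \<exists>a. (\<forall>p. p \<notin> G \<longrightarrow> a p = 0) \<and> x - comb d a \<in> ker d}"
  by blast

lemma rep:
  assumes d: "d \<in> Ob C" and x: "x \<in> A d"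
  shows "\<exists>a. (\<forall>p. p \<notin> G \<longrightarrow> a p = 0) \<and> x - comb d a \<in> ker d"
proof -
  let ?T = "{x \<in> A d. \<exists>a. (\<forall>p. p \<notin> G \<longrightarrow> a p = 0) \<and> x - comb d a \<in> ker d}"
  have sT: "subspace ?T"
  proof (rule subspaceI)
    have "0 - comb d (\<lambda>_. 0) \<in> ker d"
      using comb_zero[of d] subspace_0[OF ker_sub[OF d]] by simp
    thus "0 \<in> ?T" using subspace_0[OF A_sub[OF d]] by (intro memT) auto
    show "x + y \<in> ?T" if "x \<in> ?T" "y \<in> ?T" for x y
    proof -
      have "\<exists>a. (\<forall>p. p \<notin> G \<longrightarrow> a p = 0) \<and> x - comb d a \<in> ker d" using that(1) by (simp only: mem_Collect_eq)
      then obtain a where a: "\<forall>p. p \<notin> G \<longrightarrow> a p = 0" "x - comb d a \<in> ker d" by blast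
      have "\<exists>b. (\<forall>p. p \<notin> G \<longrightarrow> b p = 0) \<and> y - comb d b \<in> ker d" using that(2) by (simp only: mem_Collect_eq)
      then obtain b where b: "\<forall>p. p \<notin> G \<longrightarrow> b p = 0" "y - comb d b \<in> ker d" by blast
      have e: "x + y - comb d (a + b) = (x - comb d a) + (y - comb d b)" unfolding comb_add by (simp add: algebra_simps)
      have "(x - comb d a) + (y - comb d b) \<in> ker d" using a(2) b(2) by (rule subspace_add[OF ker_sub[OF d]])
      hence k: "x + y - comb d (a + b) \<in> ker d" unfolding e .
      have s: "\<forall>p. p \<notin> G \<longrightarrow> (a + b) p = 0" using a b by simp
      have xy: "x + y \<in> A d" using that subspace_add[OF A_sub[OF d]] by auto
      show ?thesis by (rule memT[OF xy s k])
    qed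
    show "c *s x \<in> ?T" if "x \<in> ?T" for c x
    proof -
      have "\<exists>a. (\<forall>p. p \<notin> G \<longrightarrow> a p = 0) \<and> x - comb d a \<in> ker d" using that(1) by (simp only: mem_Collect_eq)
      then obtain a where a: "\<forall>p. p \<notin> G \<longrightarrow> a p = 0" "x - comb d a \<in> ker d" by blast
      have e: "c *s x - comb d (fsc c a) = c *s (x - comb d a)" unfolding comb_fsc by (rule scale_right_diff_distrib[symmetric])
      have "c *s (x - comb d a) \<in> ker d" using a(2) by (rule subspace_scale[OF ker_sub[OF d]])
      hence k: "c *s x - comb d (fsc c a) \<in> ker d" unfolding e .
      have s: "\<forall>p. p \<notin> G \<longrightarrow> (fsc c a) p = 0" using a by (simp add: fsc_def)
      have cx: "c *s x \<in> A d" using that subspace_scale[OF A_sub[OF d]] by auto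
      show ?thesis by (rule memT[OF cx s k])
    qed
  qed
  have gens: "{act u x | u x z. (z, x) \<in> G \<and> u \<in> Hom C z d} \<subseteq> ?T"
  proof
    fix y assume "y \<in> {act u x | u x z. (z, x) \<in> G \<and> u \<in> Hom C z d}"
    then obtain u x z where y: "y = act u x" "(z, x) \<in> G" "u \<in> Hom C z d" by blast
    have pS: "(z, x) \<in> S d" using y by (auto simp: S_def cle_def)
    have "comb d (delta (z, x)) = (\<Sum>p\<in>S d. (if p = (z, x) then v d (z, x) else 0))"
      unfolding comb_def by (rule sum.cong) (auto simp: delta_def)
    also have "\<dots> = v d (z, x)" using S_fin pS by (simp add: sum.delta')
    finally have "comb d (delta (z, x)) = v d (z, x)" .
    hence k: "y - comb d (delta (z, x)) \<in> ker d" using v_prop(2)[OF pS, of u] y by simp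
    have yA: "y \<in> A d" using y(1) act_A[OF y(3)] G_A[OF y(2)] by blast
    have s: "\<forall>p. p \<notin> G \<longrightarrow> delta (z, x) p = 0" using y by (auto simp: delta_def)
    show "y \<in> ?T" by (rule memT[OF yA s k])
  qed
  have "A d \<subseteq> ?T" using gen[OF d] span_minimal[OF gens sT] by (rule subset_trans)
  hence "x \<in> ?T" using x by (rule subsetD)
  thus ?thesis by simp
qed

end


context pmod
begin

lemma dimRel_bound: "fv.dim (Rel d) < card G + 1"
proof -
  have "fv.dim (Rel d) \<le> card (delta ` G)" using fv.dim_le_card[OF Rel_span] G_fin by simp
  also have "\<dots> \<le> card G" using G_fin by (rule card_image_le)
  finally show ?thesis by simp
qed

lemma cardS_bound: "card (S d) < card G + 1"
  using card_mono[OF G_fin S_sub, of d] by simp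

definition X where "X = {d \<in> Ob C. \<forall>w \<in> Ob C. cle C d w \<longrightarrow> S w = S d \<and> Rel w = Rel d}"

lemma iso_X:
  assumes d: "d \<in> X" and w: "w \<in> Ob C" and f: "f \<in> Hom C d w"
  shows "coinv_iso C scale A R act d w f"
proof -
  have dO: "d \<in> Ob C" using d by (simp add: X_def)
  have cl: "cle C d w" using f by (auto simp: cle_def)
  have SE: "S w = S d" and RE: "Rel w = Rel d" using d w cl by (auto simp: X_def)
  have surj: "\<exists>x \<in> A d. y - act f x \<in> ker w" if y: "y \<in> A w" for y
  proof -
    obtain a where a: "\<forall>p. p \<notin> G \<longrightarrow> a p = 0" "y - comb w a \<in> ker w" using rep[OF w y] by blast
    have t: "act f (comb d a) - comb w a \<in> ker w" using transfer'[OF f, of a] SE by (simp add: comb_def)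
    have "y - act f (comb d a) = (y - comb w a) - (act f (comb d a) - comb w a)" by simp
    also have "\<dots> \<in> ker w" using a(2) t by (rule subspace_diff[OF ker_sub[OF w]])
    finally show ?thesis using comb_A[OF dO] by blast
  qed
  have inj: "x \<in> ker d" if x: "x \<in> A d" and k: "act f x \<in> ker w" for x
  proof -
    obtain a where a: "\<forall>p. p \<notin> G \<longrightarrow> a p = 0" "x - comb d a \<in> ker d" using rep[OF dO x] by blast
    have cA: "comb d a \<in> A d" using comb_A[OF dO] .
    have "act f (x - comb d a) \<in> ker w" using K2[OF f a(2)] .
    hence k2: "act f x - act f (comb d a) \<in> ker w" using act_diff[OF f x cA] by simp
    have t: "act f (comb d a) - comb w a \<in> ker w" using transfer'[OF f, of a] SE by (simp add: comb_def)
    have "comb w a = act f x - (act f x - act f (comb d a)) - (act f (comb d a) - comb w a)" by simp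
    also have "\<dots> \<in> ker w"
      by (intro subspace_diff[OF ker_sub[OF w]] k k2 t)
    finally have "a \<in> Rel w" using a(1) by (simp add: Rel_def)
    hence "a \<in> Rel d" using RE by simp
    hence "comb d a \<in> ker d" by (simp add: Rel_def)
    hence "(x - comb d a) + comb d a \<in> ker d" using a(2) by (intro subspace_add[OF ker_sub[OF dO]])
    thus ?thesis by simp
  qed
  show ?thesis unfolding coinv_iso_def using surj inj by (simp add: ker_def)
qed

lemma stabilize: "coinv_stabilize C scale A R act"
  unfolding coinv_stabilize_def
proof (intro exI[of _ X] conjI ballI impI)
  show "X \<subseteq> Ob C" by (auto simp: X_def)
next
  fix c d assume c: "c \<in> X" and d: "d \<in> Ob C" and cd: "cle C c d"
  show "d \<in> X" unfolding X_def
  proof (rule CollectI, rule conjI[OF d], intro ballI impI)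
    fix w assume w: "w \<in> Ob C" and dw: "cle C d w"
    have cw: "cle C c w" using cle_trans[OF cat cd dw] .
    have "S w = S c \<and> Rel w = Rel c" using c w cw by (auto simp: X_def)
    moreover have "S d = S c \<and> Rel d = Rel c" using c d cd by (auto simp: X_def)
    ultimately show "S w = S d \<and> Rel w = Rel d" by simp
  qed
next
  fix c d f assume "c \<in> X" "d \<in> Ob C" "f \<in> Hom C c d"
  thus "coinv_iso C scale A R act c d f" by (rule iso_X)
next
  fix c assume c: "c \<in> Ob C"
  obtain d0 where d0: "d0 \<in> Ob C \<and> cle C c d0"
    "\<forall>y. y \<in> Ob C \<and> cle C c y \<longrightarrow> card (S y) \<le> card (S d0)"
    using ex_has_greatest_nat[of "\<lambda>d. d \<in> Ob C \<and> cle C c d" c "\<lambda>d. card (S d)" "card G + 1"]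
      c cle_refl[OF cat c] cardS_bound by blast
  obtain d1 where d1: "d1 \<in> Ob C \<and> cle C d0 d1"
    "\<forall>y. y \<in> Ob C \<and> cle C d0 y \<longrightarrow> fv.dim (Rel y) \<le> fv.dim (Rel d1)"
    using ex_has_greatest_nat[of "\<lambda>d. d \<in> Ob C \<and> cle C d0 d" d0 "\<lambda>d. fv.dim (Rel d)" "card G + 1"]
      d0(1) cle_refl[OF cat] dimRel_bound by blast
  have cd1: "cle C c d1" using cle_trans[OF cat] d0(1) d1(1) by blast
  have "d1 \<in> X" unfolding X_def
  proof (intro CollectI conjI ballI impI)
    show "d1 \<in> Ob C" using d1 by simp
    fix w assume w: "w \<in> Ob C" and dw: "cle C d1 w"
    obtain f where f: "f \<in> Hom C d1 w" using dw by (auto simp: cle_def)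
    obtain f0 where f0: "f0 \<in> Hom C d0 d1" using d1 by (auto simp: cle_def)
    have cw: "cle C c w" using cle_trans[OF cat cd1 dw] .
    have s1: "S d0 \<subseteq> S d1" using S_mono[OF f0] .
    have s2: "S d1 \<subseteq> S w" using S_mono[OF f] .
    have "card (S w) \<le> card (S d0)" using d0(2) w cw by blast
    hence "S d0 = S w" using card_subset_eq[OF S_fin] s1 s2 by (metis card_seteq order_trans S_fin)
    hence SE: "S w = S d1" using s1 s2 by blast
    thus "S w = S d1" .
    have "Rel d1 \<subseteq> Rel w" using Rel_mono[OF f] SE by simp
    moreover have "fv.dim (Rel w) \<le> fv.dim (Rel d1)"
      using d1(2) w cle_trans[OF cat _ dw] d1(1) by blast
    ultimately show "Rel w = Rel d1"
      using fv.sub_eq_dim[OF Rel_subspace[OF d1(1)[THEN conjunct1]] Rel_subspace[OF w] _ Rel_span] G_fin by blast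
  qed
  thus "\<exists>x\<in>X. cle C c x" using cd1 by blast
qed

end


lemma Cm_sub: "C_module C sc M act \<Longrightarrow> \<forall>c \<in> Ob C. module.subspace sc (M c)"
  unfolding C_module_def by (elim conjE) assumption
lemma Cm_A: "C_module C sc M act \<Longrightarrow> \<forall>f \<in> Mor C. \<forall>x \<in> M (Dom C f). act f x \<in> M (Cod C f)"
  unfolding C_module_def by (elim conjE) assumption
lemma Cm_add: "C_module C sc M act \<Longrightarrow> \<forall>f \<in> Mor C. \<forall>x \<in> M (Dom C f). \<forall>y \<in> M (Dom C f). act f (x + y) = act f x + act f y"
  unfolding C_module_def by (elim conjE) assumption
lemma Cm_scale: "C_module C sc M act \<Longrightarrow> \<forall>f \<in> Mor C. \<forall>r. \<forall>x \<in> M (Dom C f). act f (sc r x) = sc r (act f x)"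
  unfolding C_module_def by (elim conjE) assumption
lemma Cm_id: "C_module C sc M act \<Longrightarrow> \<forall>c \<in> Ob C. \<forall>x \<in> M c. act (Idm C c) x = x"
  unfolding C_module_def by (elim conjE) assumption
lemma Cm_comp: "C_module C sc M act \<Longrightarrow> \<forall>f \<in> Mor C. \<forall>g \<in> Mor C. Cod C f = Dom C g \<longrightarrow>
        (\<forall>x \<in> M (Dom C f). act (Comp C g f) x = act g (act f x))"
  unfolding C_module_def by (elim conjE) assumption

context
  fixes C :: "('o, 'm) cat" and sc :: "complex \<Rightarrow> 'v::ab_group_add \<Rightarrow> 'v" and M act
  assumes vs: "vector_space sc" and FI: "FI_type C" and Cm: "C_module C sc M act"
begin

interpretation V: vector_space sc by (rule vs)

lemmas cat' = FI_cat[OF FI]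

lemma M_actA: "f \<in> Hom C c d \<Longrightarrow> x \<in> M c \<Longrightarrow> act f x \<in> M d"
  using Cm_A[OF Cm] Hom_D[OF cat'] by metis

lemma M_add: "f \<in> Hom C c d \<Longrightarrow> x \<in> M c \<Longrightarrow> y \<in> M c \<Longrightarrow> act f (x + y) = act f x + act f y"
  using Cm_add[OF Cm] Hom_D[OF cat'] by metis

lemma M_scale: "f \<in> Hom C c d \<Longrightarrow> x \<in> M c \<Longrightarrow> act f (sc r x) = sc r (act f x)"
  using Cm_scale[OF Cm] Hom_D[OF cat'] by metis

lemma M_comp: "f \<in> Hom C a b \<Longrightarrow> g \<in> Hom C b c \<Longrightarrow> x \<in> M a \<Longrightarrow> act (Comp C g f) x = act g (act f x)"
proof -
  assume f: "f \<in> Hom C a b" and g: "g \<in> Hom C b c" and x: "x \<in> M a"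
  show ?thesis using Cm_comp[OF Cm] Hom_D[OF cat' f] Hom_D[OF cat' g] x by auto
qed

lemma M_sub: "c \<in> Ob C \<Longrightarrow> V.subspace (M c)"
  using Cm_sub[OF Cm] by blast

lemma gen_M:
  assumes E: "finite E" "E \<subseteq> Sigma (Ob C) M"
    and EN: "\<forall>N. submodule C sc M act N \<and> (\<forall>(c, x) \<in> E. x \<in> N c) \<longrightarrow> (\<forall>c \<in> Ob C. N c = M c)"
    and d: "d \<in> Ob C"
  shows "M d \<subseteq> V.span {act u x | u x z. (z, x) \<in> E \<and> u \<in> Hom C z d}"
proof -
  define N where "N c = V.span {act u x | u x z. (z, x) \<in> E \<and> u \<in> Hom C z c}" for c
  have NM: "N c \<subseteq> M c" if c: "c \<in> Ob C" for c
    unfolding N_def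
  proof (rule V.span_minimal[OF _ M_sub[OF c]])
    show "{act u x | u x z. (z, x) \<in> E \<and> u \<in> Hom C z c} \<subseteq> M c"
    proof
      fix y assume "y \<in> {act u x | u x z. (z, x) \<in> E \<and> u \<in> Hom C z c}"
      then obtain u x z where y: "y = act u x" "(z, x) \<in> E" "u \<in> Hom C z c" by blast
      have xM: "x \<in> M z" using y(2) E(2) by blast
      show "y \<in> M c" using M_actA[OF y(3) xM] y(1) by simp
    qed
  qed
  have sm: "submodule C sc M act N"
    unfolding submodule_def
  proof (intro conjI ballI)
    fix c assume "c \<in> Ob C"
    thus "V.subspace (N c)" "N c \<subseteq> M c" using NM by (auto simp: N_def)
  next
    fix f x assume f: "f \<in> Mor C" and x: "x \<in> N (Dom C f)"
    have fH: "f \<in> Hom C (Dom C f) (Cod C f)" using f by (rule Mor_Hom)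
    have dO: "Dom C f \<in> Ob C" and cO: "Cod C f \<in> Ob C" using Hom_D[OF cat' fH] by auto
    let ?T = "{y \<in> M (Dom C f). act f y \<in> N (Cod C f)}"
    have sT: "V.subspace ?T"
    proof (rule V.subspaceI)
      have "act f 0 = 0" using M_add[OF fH, of 0 0] V.subspace_0[OF M_sub[OF dO]] by simp
      thus "0 \<in> ?T" using V.subspace_0[OF M_sub[OF dO]] V.subspace_0[of "N (Cod C f)"]
        by (simp add: N_def)
      show "a + b \<in> ?T" if "a \<in> ?T" "b \<in> ?T" for a b
      proof -
        have a: "a \<in> M (Dom C f)" "act f a \<in> N (Cod C f)" using that(1) by simp_all
        have b: "b \<in> M (Dom C f)" "act f b \<in> N (Cod C f)" using that(2) by simp_all
        have "act f (a + b) = act f a + act f b" using M_add[OF fH a(1) b(1)] .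
        moreover have "act f a + act f b \<in> N (Cod C f)" using a(2) b(2) unfolding N_def by (rule V.span_add)
        moreover have "a + b \<in> M (Dom C f)" using V.subspace_add[OF M_sub[OF dO] a(1) b(1)] .
        ultimately show ?thesis by simp
      qed
      show "sc r a \<in> ?T" if "a \<in> ?T" for r a
      proof -
        have a: "a \<in> M (Dom C f)" "act f a \<in> N (Cod C f)" using that(1) by simp_all
        have "act f (sc r a) = sc r (act f a)" using M_scale[OF fH a(1)] .
        moreover have "sc r (act f a) \<in> N (Cod C f)" using a(2) unfolding N_def by (rule V.span_scale)
        moreover have "sc r a \<in> M (Dom C f)" using V.subspace_scale[OF M_sub[OF dO] a(1)] .
        ultimately show ?thesis by simp
      qed
    qed
    have gens: "{act u x | u x z. (z, x) \<in> E \<and> u \<in> Hom C z (Dom C f)} \<subseteq> ?T"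
    proof
      fix y assume "y \<in> {act u x | u x z. (z, x) \<in> E \<and> u \<in> Hom C z (Dom C f)}"
      then obtain u x z where y: "y = act u x" "(z, x) \<in> E" "u \<in> Hom C z (Dom C f)" by blast
      have xM: "x \<in> M z" using y(2) E(2) by blast
      have "act f y = act (Comp C f u) x" using M_comp[OF y(3) fH xM] y(1) by simp
      moreover have "Comp C f u \<in> Hom C z (Cod C f)" using comp_Hom[OF cat' y(3) fH] .
      ultimately have "act f y \<in> N (Cod C f)" unfolding N_def using y(2) by (intro V.span_base) blast
      moreover have "y \<in> M (Dom C f)" using M_actA[OF y(3) xM] y(1) by simp
      ultimately show "y \<in> ?T" by blast
    qed
    have Nd: "N (Dom C f) = V.span {act u x | u x z. (z, x) \<in> E \<and> u \<in> Hom C z (Dom C f)}" by (simp add: N_def)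
    have "N (Dom C f) \<subseteq> ?T" unfolding Nd by (rule V.span_minimal[OF gens sT])
    thus "act f x \<in> N (Cod C f)" using x by blast
  qed
  have EinN: "\<forall>(c, x) \<in> E. x \<in> N c"
  proof (intro ballI, clarify)
    fix c x assume cx: "(c, x) \<in> E"
    have c: "c \<in> Ob C" and xM: "x \<in> M c" using cx E(2) by auto
    have "act (Idm C c) x = x" using Cm_id[OF Cm] c xM by blast
    moreover have "Idm C c \<in> Hom C c c" using id_Hom[OF cat' c] .
    ultimately have "x \<in> {act u x | u x z. (z, x) \<in> E \<and> u \<in> Hom C z c}" using cx by force
    thus "x \<in> N c" unfolding N_def by (rule V.span_base)
  qed
  have "\<forall>c \<in> Ob C. N c = M c" using EN sm EinN by blast
  hence "N d = M d" using d by blast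
  thus ?thesis by (simp add: N_def)
qed

lemma partA: assumes fg: "fin_gen C sc M act" shows "coinv_stabilize C sc M (\<lambda>_. {}) act"
proof -
  obtain E where E0: "finite E \<and> E \<subseteq> Sigma (Ob C) M \<and>
    (\<forall>N. submodule C sc M act N \<and> (\<forall>(c, x) \<in> E. x \<in> N c) \<longrightarrow> (\<forall>c \<in> Ob C. N c = M c))"
    using fg unfolding fin_gen_def by (rule exE)
  note E = conjunct1[OF E0] conjunct1[OF conjunct2[OF E0]] conjunct2[OF conjunct2[OF E0]]
  interpret P: pmod sc C M "\<lambda>_. {}" act E
  proof (rule pmod.intro[OF vs], rule pmod_axioms.intro)
    show "FI_type C" by (rule FI)
    show "c \<in> Ob C \<Longrightarrow> V.subspace (M c)" for c by (rule M_sub)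
    show "{} \<subseteq> M c" for c by simp
    show "f \<in> Hom C c d \<Longrightarrow> x \<in> M c \<Longrightarrow> act f x \<in> M d" for f c d x by (rule M_actA)
    show "f \<in> Hom C c d \<Longrightarrow> x \<in> M c \<Longrightarrow> y \<in> M c \<Longrightarrow> act f (x + y) = act f x + act f y" for f c d x y by (rule M_add)
    show "f \<in> Hom C c d \<Longrightarrow> x \<in> M c \<Longrightarrow> act f (sc r x) = sc r (act f x)" for f c d x r by (rule M_scale)
    show "f \<in> Hom C c d \<Longrightarrow> x \<in> {} \<Longrightarrow> act f x \<in> V.span {}" for f c d x by simp
    show "f \<in> Hom C a b \<Longrightarrow> g \<in> Hom C b c \<Longrightarrow> x \<in> M a \<Longrightarrow> act (Comp C g f) x = act g (act f x)" for f a b g c x by (rule M_comp)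
    show "finite E" by (rule E(1))
    show "(z, x) \<in> E \<Longrightarrow> z \<in> Ob C \<and> x \<in> M z" for z x using E(2) by blast
    show "d \<in> Ob C \<Longrightarrow> M d \<subseteq> V.span {act u x | u x z. (z, x) \<in> E \<and> u \<in> Hom C z d}" for d
      by (rule gen_M[OF E])
  qed
  show ?thesis by (rule P.stabilize)
qed

end


lemma fsum_apply: "(\<Sum>a\<in>A. f a) x = (\<Sum>a\<in>A. f a x)"
  by (induction A rule: infinite_finite_induct) auto

lemma vs_fscale: "vector_space sc \<Longrightarrow> vector_space (fscale sc)"
proof -
  assume vs: "vector_space sc"
  interpret V: vector_space sc by (rule vs)
  show ?thesis
    by unfold_locales (auto simp: fscale_def fun_eq_iff V.scale_right_distrib V.scale_left_distrib)
qed

lemma pb_iso: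
  assumes cat: "is_category C"
    and pb: "pullback_square C p1 p2 f h"
    and p1: "p1 \<in> Hom C p c1" and p2: "p2 \<in> Hom C p c2"
    and f: "f \<in> Hom C c1 d" and h: "h \<in> Hom C c2 d"
    and a: "a \<in> Hom C p s" and b: "b \<in> Hom C s p"
    and ba: "Comp C b a = Idm C p" and ab: "Comp C a b = Idm C s"
  shows "pullback_square C (Comp C p1 b) (Comp C p2 b) f h"
proof -
  have q1: "Comp C p1 b \<in> Hom C s c1" using comp_Hom[OF cat b p1] .
  have q2: "Comp C p2 b \<in> Hom C s c2" using comp_Hom[OF cat b p2] .
  have comm0: "Comp C f p1 = Comp C h p2" using pb by (simp add: pullback_square_def)
  have "Comp C f (Comp C p1 b) = Comp C (Comp C f p1) b" using comp_assoc[OF cat b p1 f] .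
  also have "\<dots> = Comp C (Comp C h p2) b" using comm0 by simp
  also have "\<dots> = Comp C h (Comp C p2 b)" using comp_assoc[OF cat b p2 h] by simp
  finally have comm: "Comp C f (Comp C p1 b) = Comp C h (Comp C p2 b)" .
  have cod1: "Cod C (Comp C p1 b) = c1" and cod2: "Cod C (Comp C p2 b) = c2"
    and dom1: "Dom C (Comp C p1 b) = s" using Hom_D[OF cat q1] Hom_D[OF cat q2] by auto
  have cp1: "Cod C p1 = c1" and cp2: "Cod C p2 = c2" and dp1: "Dom C p1 = p"
    using Hom_D[OF cat p1] Hom_D[OF cat p2] by auto
  have univ: "\<exists>!u. u \<in> Hom C q s \<and> Comp C (Comp C p1 b) u = r1 \<and> Comp C (Comp C p2 b) u = r2"
    if q: "q \<in> Ob C" and r1: "r1 \<in> Hom C q c1" and r2: "r2 \<in> Hom C q c2"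
      and e: "Comp C f r1 = Comp C h r2" for q r1 r2
  proof -
    have "\<exists>!u. u \<in> Hom C q (Dom C p1) \<and> Comp C p1 u = r1 \<and> Comp C p2 u = r2"
      using pb q r1 r2 e cp1 cp2 unfolding pullback_square_def by blast
    then obtain u0 where u0: "u0 \<in> Hom C q p" "Comp C p1 u0 = r1" "Comp C p2 u0 = r2"
      and uq: "\<And>u. u \<in> Hom C q p \<Longrightarrow> Comp C p1 u = r1 \<Longrightarrow> Comp C p2 u = r2 \<Longrightarrow> u = u0"
      using dp1 by blast
    have au: "Comp C a u0 \<in> Hom C q s" using comp_Hom[OF cat u0(1) a] .
    have bau: "Comp C b (Comp C a u0) = u0"
      using comp_assoc[OF cat u0(1) a b] ba comp_id_l[OF cat u0(1)] by simp
    have E1: "Comp C (Comp C p1 b) (Comp C a u0) = r1"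
      using comp_assoc[OF cat au b p1] bau u0(2) by simp
    have E2: "Comp C (Comp C p2 b) (Comp C a u0) = r2"
      using comp_assoc[OF cat au b p2] bau u0(3) by simp
    show ?thesis
    proof (rule ex1I[of _ "Comp C a u0"])
      show "Comp C a u0 \<in> Hom C q s \<and> Comp C (Comp C p1 b) (Comp C a u0) = r1 \<and> Comp C (Comp C p2 b) (Comp C a u0) = r2"
        using au E1 E2 by simp
    next
      fix u assume u: "u \<in> Hom C q s \<and> Comp C (Comp C p1 b) u = r1 \<and> Comp C (Comp C p2 b) u = r2"
      have bu: "Comp C b u \<in> Hom C q p" using comp_Hom[OF cat _ b] u by blast
      have "Comp C p1 (Comp C b u) = r1" using comp_assoc[OF cat _ b p1, of u q] u by simp
      moreover have "Comp C p2 (Comp C b u) = r2" using comp_assoc[OF cat _ b p2, of u q] u by simp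
      ultimately have "Comp C b u = u0" using uq[OF bu] by blast
      hence "Comp C a (Comp C b u) = Comp C a u0" by simp
      moreover have "Comp C a (Comp C b u) = u"
        using comp_assoc[OF cat _ b a, of u q] u ab comp_id_l[OF cat, of u q s] by simp
      ultimately show "u = Comp C a u0" by simp
    qed
  qed
  show ?thesis unfolding pullback_square_def
    using comm univ cod1 cod2 dom1 by simp
qed


locale tctx =
  fixes C :: "('o, 'm) cat" and sc :: "complex \<Rightarrow> 'v::ab_group_add \<Rightarrow> 'v" and M act
    and N :: nat and cs :: "nat \<Rightarrow> 'o" and ns :: "nat \<Rightarrow> nat" and \<rho> :: "nat \<Rightarrow> 'm \<Rightarrow> nat \<Rightarrow> nat \<Rightarrow> complex"
    and E :: "('o \<times> 'v) set"
  assumes vs: "vector_space sc" and FI: "FI_type C" and Cm: "C_module C sc M act"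
    and fd: "free_data C N cs ns \<rho>"
    and E_fin: "finite E" and E_sub: "E \<subseteq> Sigma (Ob C) M"
    and E_gen: "\<And>d. d \<in> Ob C \<Longrightarrow> M d \<subseteq> module.span sc {act u x | u x z. (z, x) \<in> E \<and> u \<in> Hom C z d}"
begin

interpretation V: vector_space sc by (rule vs)
interpretation W: vector_space "fscale sc" by (rule vs_fscale[OF vs])

lemmas cat = FI_cat[OF FI]

abbreviation "TA \<equiv> tens_A C N cs ns M"
abbreviation "TR \<equiv> tens_R C sc N cs ns \<rho> M"
abbreviation "TAct \<equiv> tens_act C N cs ns act"

lemma cs_Ob: "k < N \<Longrightarrow> cs k \<in> Ob C"
  using fd by (simp add: free_data_def)

lemma mA: "f \<in> Hom C c d \<Longrightarrow> x \<in> M c \<Longrightarrow> act f x \<in> M d"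
  by (rule M_actA[OF vs FI Cm])
lemma mAdd: "f \<in> Hom C c d \<Longrightarrow> x \<in> M c \<Longrightarrow> y \<in> M c \<Longrightarrow> act f (x + y) = act f x + act f y"
  by (rule M_add[OF vs FI Cm])
lemma mSc: "f \<in> Hom C c d \<Longrightarrow> x \<in> M c \<Longrightarrow> act f (sc r x) = sc r (act f x)"
  by (rule M_scale[OF vs FI Cm])
lemma mComp: "f \<in> Hom C a b \<Longrightarrow> g \<in> Hom C b c \<Longrightarrow> x \<in> M a \<Longrightarrow> act (Comp C g f) x = act g (act f x)"
  by (rule M_comp[OF vs FI Cm])
lemma mSub: "c \<in> Ob C \<Longrightarrow> V.subspace (M c)"
  by (rule M_sub[OF vs FI Cm])
lemma m0: "c \<in> Ob C \<Longrightarrow> 0 \<in> M c"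
  using V.subspace_0[OF mSub] .

lemma act0: "f \<in> Hom C c d \<Longrightarrow> act f 0 = 0"
proof -
  assume f: "f \<in> Hom C c d"
  have c: "c \<in> Ob C" using Hom_D[OF cat f] by simp
  show ?thesis using mAdd[OF f m0[OF c] m0[OF c]] by simp
qed

lemma single_apply: "single t v x = (if x = t then v else 0)"
  by (simp add: single_def)

lemma single_add: "single t ((x::'v) + y) = single t x + single t y"
  by (auto simp: single_def fun_eq_iff)
lemma single_sc: "single t (sc r (x::'v)) = fscale sc r (single t x)"
  by (auto simp: single_def fun_eq_iff fscale_def)

lemma TA_mem: "\<phi> \<in> TA d \<longleftrightarrow> (\<forall>k f i. \<phi> (k, f, i) \<noteq> 0 \<longrightarrow> k < N \<and> f \<in> Hom C (cs k) d \<and> i < ns k) \<and>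
         (\<forall>k < N. \<forall>f \<in> Hom C (cs k) d. \<forall>i < ns k. \<phi> (k, f, i) \<in> M d)"
  by (simp add: tens_A_def)

lemma TA_sub: "d \<in> Ob C \<Longrightarrow> W.subspace (TA d)"
proof (rule W.subspaceI)
  assume d: "d \<in> Ob C"
  show "0 \<in> TA d" unfolding TA_mem using m0[OF d] by simp
  show "x + y \<in> TA d" if "x \<in> TA d" "y \<in> TA d" for x y
    using that V.subspace_add[OF mSub[OF d]] unfolding TA_mem by (metis add.right_neutral plus_fun_apply)
  show "fscale sc c x \<in> TA d" if "x \<in> TA d" for c x
    using that V.subspace_scale[OF mSub[OF d]] unfolding TA_mem fscale_def by (metis V.scale_zero_right)
qed

lemma single_TA: "k < N \<Longrightarrow> f \<in> Hom C (cs k) d \<Longrightarrow> i < ns k \<Longrightarrow> m \<in> M d \<Longrightarrow> single (k, f, i) m \<in> TA d"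
  unfolding TA_mem single_def by (auto simp: m0 Hom_D[OF cat])

lemma tact_def': "TAct h \<phi> (k, F, i) = (if k < N \<and> i < ns k
   then (\<Sum>f \<in> {f \<in> Hom C (cs k) (Dom C h). Comp C h f = F}. act h (\<phi> (k, f, i))) else 0)"
  by (simp add: tens_act_def)

lemma tact_eval1:
  assumes h: "h \<in> Hom C c d" and k: "k < N" and i: "i < ns k" and u: "u \<in> Hom C (cs k) c"
  shows "TAct h \<phi> (k, Comp C h u, i) = act h (\<phi> (k, u, i))"
proof -
  have dh: "Dom C h = c" using Hom_D[OF cat h] by simp
  have e: "{f \<in> Hom C (cs k) (Dom C h). Comp C h f = Comp C h u} = {u}"
    using FI_mono[OF FI _ u h] u dh by auto
  show ?thesis unfolding tact_def' e using k i by simp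
qed

lemma tact_eval0:
  assumes h: "h \<in> Hom C c d" and nu: "\<forall>u \<in> Hom C (cs k) c. Comp C h u \<noteq> F"
  shows "TAct h \<phi> (k, F, i) = 0"
proof -
  have dh: "Dom C h = c" using Hom_D[OF cat h] by simp
  have e: "{f \<in> Hom C (cs k) (Dom C h). Comp C h f = F} = {}" using nu dh by auto
  show ?thesis unfolding tact_def' e by simp
qed

lemma tact_out: assumes "\<not> (k < N \<and> i < ns k)" shows "TAct h \<phi> (k, F, i) = 0"
  by (simp only: tact_def' if_not_P[OF assms])

lemma tact_cases:
  fixes k i :: nat and F :: 'm
  assumes h: "h \<in> Hom C c d"
  obtains (out) "\<not> (k < N \<and> i < ns k)"
    | (img) u where "k < N" "i < ns k" "u \<in> Hom C (cs k) c" "F = Comp C h u"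
    | (none) "k < N" "i < ns k" "\<forall>u \<in> Hom C (cs k) c. Comp C h u \<noteq> F"
  by blast

lemma tact_A: assumes h: "h \<in> Hom C c d" and \<phi>: "\<phi> \<in> TA c" shows "TAct h \<phi> \<in> TA d"
  unfolding TA_mem
proof (rule conjI; intro allI impI ballI)
  fix k F i assume nz: "TAct h \<phi> (k, F, i) \<noteq> 0"
  show "k < N \<and> F \<in> Hom C (cs k) d \<and> i < ns k"
  proof (cases rule: tact_cases[OF h, where k=k and i=i and F=F, case_names out img none])
    case out thus ?thesis using nz tact_out by metis
  next
    case (img u) thus ?thesis using comp_Hom[OF cat img(3) h] by simp
  next
    case none thus ?thesis using nz tact_eval0[OF h] by metis
  qed
next
  fix k F i assume k: "k < N" and F: "F \<in> Hom C (cs k) d" and i: "i < ns k"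
  have d: "d \<in> Ob C" using Hom_D[OF cat h] by simp
  show "TAct h \<phi> (k, F, i) \<in> M d"
  proof (cases rule: tact_cases[OF h, where k=k and i=i and F=F, case_names out img none])
    case out thus ?thesis using k i by simp
  next
    case (img u)
    have "\<phi> (k, u, i) \<in> M c" using \<phi> img unfolding TA_mem by blast
    thus ?thesis using img tact_eval1[OF h k i img(3)] mA[OF h] by simp
  next
    case none thus ?thesis using tact_eval0[OF h] m0[OF d] by metis
  qed
qed

lemma tact_add: assumes h: "h \<in> Hom C c d" and \<phi>: "\<phi> \<in> TA c" and \<psi>: "\<psi> \<in> TA c"
  shows "TAct h (\<phi> + \<psi>) = TAct h \<phi> + TAct h \<psi>"
proof (rule ext, clarify)
  fix k F i
  show "TAct h (\<phi> + \<psi>) (k, F, i) = (TAct h \<phi> + TAct h \<psi>) (k, F, i)"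
  proof (cases rule: tact_cases[OF h, where k=k and i=i and F=F, case_names out img none])
    case out thus ?thesis using tact_out by simp
  next
    case (img u)
    have a: "\<phi> (k, u, i) \<in> M c" "\<psi> (k, u, i) \<in> M c" using \<phi> \<psi> img unfolding TA_mem by blast+
    show ?thesis using img tact_eval1[OF h img(1,2,3)] mAdd[OF h a] by simp
  next
    case none thus ?thesis using tact_eval0[OF h] by simp
  qed
qed

lemma tact_scale: assumes h: "h \<in> Hom C c d" and \<phi>: "\<phi> \<in> TA c"
  shows "TAct h (fscale sc r \<phi>) = fscale sc r (TAct h \<phi>)"
proof (rule ext, clarify)
  fix k F i
  show "TAct h (fscale sc r \<phi>) (k, F, i) = fscale sc r (TAct h \<phi>) (k, F, i)"
  proof (cases rule: tact_cases[OF h, where k=k and i=i and F=F, case_names out img none])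
    case out thus ?thesis using tact_out by (simp add: fscale_def)
  next
    case (img u)
    have a: "\<phi> (k, u, i) \<in> M c" using \<phi> img unfolding TA_mem by blast
    show ?thesis using img tact_eval1[OF h img(1,2,3)] mSc[OF h a] by (simp add: fscale_def)
  next
    case none thus ?thesis using tact_eval0[OF h] by (simp add: fscale_def)
  qed
qed

lemma tact_single:
  assumes h: "h \<in> Hom C c d" and k0: "k0 < N" and i0: "i0 < ns k0" and f0: "f0 \<in> Hom C (cs k0) c" and m: "m \<in> M c"
  shows "TAct h (single (k0, f0, i0) m) = single (k0, Comp C h f0, i0) (act h m)"
proof (rule ext, clarify)
  fix k F i
  show "TAct h (single (k0, f0, i0) m) (k, F, i) = single (k0, Comp C h f0, i0) (act h m) (k, F, i)"
  proof (cases rule: tact_cases[OF h, where k=k and i=i and F=F, case_names out img none])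
    case out thus ?thesis using tact_out k0 i0 by (auto simp: single_def)
  next
    case (img u)
    have ev: "TAct h (single (k0, f0, i0) m) (k, F, i) = act h (single (k0, f0, i0) m (k, u, i))"
      using tact_eval1[OF h img(1,2,3)] img(4) by simp
    show ?thesis
    proof (cases "(k, u, i) = (k0, f0, i0)")
      case True thus ?thesis using ev img(4) by (simp add: single_def)
    next
      case False
      have "(k, F, i) \<noteq> (k0, Comp C h f0, i0)"
      proof
        assume eq: "(k, F, i) = (k0, Comp C h f0, i0)"
        hence "Comp C h u = Comp C h f0" using img(4) by simp
        hence "u = f0" using FI_mono[OF FI img(3) _ h] f0 eq by simp
        thus False using False eq by simp
      qed
      thus ?thesis using ev False act0[OF h] by (auto simp: single_def)
    qed
  next
    case none
    have "(k, F, i) \<noteq> (k0, Comp C h f0, i0)" using none f0 by auto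
    thus ?thesis using tact_eval0[OF h none(3)] by (auto simp: single_def)
  qed
qed

lemma tact_0: "h \<in> Hom C c d \<Longrightarrow> TAct h 0 = 0"
proof -
  assume h: "h \<in> Hom C c d"
  have c: "c \<in> Ob C" using Hom_D[OF cat h] by simp
  have z: "(0::nat \<times> 'm \<times> nat \<Rightarrow> 'v) \<in> TA c" using W.subspace_0[OF TA_sub[OF c]] .
  show ?thesis using tact_add[OF h z z] by simp
qed

lemma tact_diff: assumes h: "h \<in> Hom C c d" and \<phi>: "\<phi> \<in> TA c" and \<psi>: "\<psi> \<in> TA c"
  shows "TAct h (\<phi> - \<psi>) = TAct h \<phi> - TAct h \<psi>"
proof -
  have c: "c \<in> Ob C" using Hom_D[OF cat h] by simp
  have "\<phi> - \<psi> \<in> TA c" using W.subspace_diff[OF TA_sub[OF c] \<phi> \<psi>] .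
  hence "TAct h (\<phi> - \<psi> + \<psi>) = TAct h (\<phi> - \<psi>) + TAct h \<psi>" using tact_add[OF h _ \<psi>] by blast
  thus ?thesis by (simp add: algebra_simps)
qed

lemma tact_sum: "h \<in> Hom C c d \<Longrightarrow> (\<And>j. j \<in> J \<Longrightarrow> g j \<in> TA c) \<Longrightarrow> TAct h (sum g J) = (\<Sum>j\<in>J. TAct h (g j))"
proof (induction J rule: infinite_finite_induct)
  case (infinite J) thus ?case using tact_0[OF infinite(2)] by (simp add: zero_fun_def)
next
  case empty thus ?case using tact_0[OF empty(1)] by (simp add: zero_fun_def)
next
  case (insert j J)
  have c: "c \<in> Ob C" using Hom_D[OF cat insert(4)] by simp
  have gJ: "\<And>j'. j' \<in> J \<Longrightarrow> g j' \<in> TA c" using insert(5) by simp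
  have s: "sum g J \<in> TA c" using W.subspace_sum[OF TA_sub[OF c] gJ] .
  have gj: "g j \<in> TA c" using insert(5) by simp
  have "TAct h (sum g (insert j J)) = TAct h (g j + sum g J)" using insert(1,2) by simp
  also have "\<dots> = TAct h (g j) + TAct h (sum g J)" using tact_add[OF insert(4) gj s] .
  also have "TAct h (sum g J) = (\<Sum>j\<in>J. TAct h (g j))" using insert(3)[OF insert(4) gJ] .
  finally show ?case using insert(1,2) by simp
qed

end


context tctx
begin

interpretation V: vector_space sc by (rule vs)
interpretation W: vector_space "fscale sc" by (rule vs_fscale[OF vs])

lemma tact_R: assumes h: "h \<in> Hom C c d" and r: "r \<in> TR c" shows "TAct h r \<in> TR d"
proof -
  obtain k f g j m where rr: "r = single (k, Comp C f g, j) m - (\<Sum>i < ns k. single (k, f, i) (sc (\<rho> k g i j) m))"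
    and k: "k < N" and f: "f \<in> Hom C (cs k) c" and g: "g \<in> Aut C (cs k)" and j: "j < ns k" and m: "m \<in> M c"
    using r unfolding tens_R_def by blast
  have gH: "g \<in> Hom C (cs k) (cs k)" using Aut_HomI[OF g] .
  have fg: "Comp C f g \<in> Hom C (cs k) c" using comp_Hom[OF cat gH f] .
  have sm: "sc r' m \<in> M c" for r' using V.subspace_scale[OF mSub m] Hom_D[OF cat h] m by blast
  have t1: "single (k, Comp C f g, j) m \<in> TA c" using single_TA[OF k fg j m] .
  have t2: "single (k, f, i) (sc (\<rho> k g i j) m) \<in> TA c" if "i \<in> {..<ns k}" for i
    using single_TA[OF k f _ sm] that by simp
  have c: "c \<in> Ob C" using Hom_D[OF cat h] by simp
  have t3: "(\<Sum>i < ns k. single (k, f, i) (sc (\<rho> k g i j) m)) \<in> TA c"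
    using W.subspace_sum[OF TA_sub[OF c] t2] .
  have "TAct h r = TAct h (single (k, Comp C f g, j) m) - TAct h (\<Sum>i < ns k. single (k, f, i) (sc (\<rho> k g i j) m))"
    unfolding rr by (rule tact_diff[OF h t1 t3])
  also have "TAct h (\<Sum>i < ns k. single (k, f, i) (sc (\<rho> k g i j) m)) = (\<Sum>i < ns k. TAct h (single (k, f, i) (sc (\<rho> k g i j) m)))"
    using tact_sum[OF h t2] .
  also have "\<dots> = (\<Sum>i < ns k. single (k, Comp C h f, i) (sc (\<rho> k g i j) (act h m)))"
    by (rule sum.cong[OF refl]) (simp add: tact_single[OF h k _ f sm] mSc[OF h m])
  also have "TAct h (single (k, Comp C f g, j) m) = single (k, Comp C (Comp C h f) g, j) (act h m)"
    using tact_single[OF h k j fg m] comp_assoc[OF cat gH f h] by simp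
  finally have e: "TAct h r = single (k, Comp C (Comp C h f) g, j) (act h m) - (\<Sum>i < ns k. single (k, Comp C h f, i) (sc (\<rho> k g i j) (act h m)))" .
  have hf: "Comp C h f \<in> Hom C (cs k) d" using comp_Hom[OF cat f h] .
  have hm: "act h m \<in> M d" using mA[OF h m] .
  show ?thesis unfolding e tens_R_def using k hf g j hm by blast
qed

lemma tact_comp: assumes f: "f \<in> Hom C a b" and g: "g \<in> Hom C b c" and \<phi>: "\<phi> \<in> TA a"
  shows "TAct (Comp C g f) \<phi> = TAct g (TAct f \<phi>)"
proof (rule ext, clarify)
  fix k F i
  have gf: "Comp C g f \<in> Hom C a c" using comp_Hom[OF cat f g] .
  show "TAct (Comp C g f) \<phi> (k, F, i) = TAct g (TAct f \<phi>) (k, F, i)"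
  proof (cases rule: tact_cases[OF gf, where k=k and i=i and F=F, case_names out img none])
    case out thus ?thesis using tact_out by metis
  next
    case (img u)
    have fu: "Comp C f u \<in> Hom C (cs k) b" using comp_Hom[OF cat img(3) f] .
    have F: "F = Comp C g (Comp C f u)" using img(4) comp_assoc[OF cat img(3) f g] by simp
    have pa: "\<phi> (k, u, i) \<in> M a" using \<phi> img unfolding TA_mem by blast
    have "TAct (Comp C g f) \<phi> (k, F, i) = act (Comp C g f) (\<phi> (k, u, i))"
      using tact_eval1[OF gf img(1,2,3)] img(4) by simp
    also have "\<dots> = act g (act f (\<phi> (k, u, i)))" using mComp[OF f g pa] .
    also have "act f (\<phi> (k, u, i)) = TAct f \<phi> (k, Comp C f u, i)" using tact_eval1[OF f img(1,2,3)] by simp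
    also have "act g \<dots> = TAct g (TAct f \<phi>) (k, F, i)" using tact_eval1[OF g img(1,2) fu] F by simp
    finally show ?thesis .
  next
    case none
    have L: "TAct (Comp C g f) \<phi> (k, F, i) = 0" using tact_eval0[OF gf none(3)] .
    show ?thesis
    proof (cases "\<exists>w \<in> Hom C (cs k) b. Comp C g w = F")
      case True
      then obtain w where w: "w \<in> Hom C (cs k) b" "F = Comp C g w" by metis
      have "\<forall>u \<in> Hom C (cs k) a. Comp C f u \<noteq> w"
      proof (intro ballI notI)
        fix u assume u: "u \<in> Hom C (cs k) a" and e: "Comp C f u = w"
        have "Comp C (Comp C g f) u = F" using comp_assoc[OF cat u f g] e w(2) by simp
        thus False using none(3) u by blast
      qed
      hence "TAct f \<phi> (k, w, i) = 0" using tact_eval0[OF f] by blast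
      moreover have "TAct g (TAct f \<phi>) (k, F, i) = act g (TAct f \<phi> (k, w, i))"
        using tact_eval1[OF g none(1,2) w(1)] w(2) by simp
      ultimately show ?thesis using L act0[OF g] by simp
    next
      case False
      hence "TAct g (TAct f \<phi>) (k, F, i) = 0" using tact_eval0[OF g] by blast
      thus ?thesis using L by simp
    qed
  qed
qed

definition J where "J d = Sigma {..<N} (\<lambda>k. Hom C (cs k) d \<times> {..<ns k})"

lemma J_fin: "d \<in> Ob C \<Longrightarrow> finite (J d)"
  unfolding J_def using FI_fin[OF FI] cs_Ob by (intro finite_SigmaI finite_cartesian_product) auto

lemma decomp: assumes d: "d \<in> Ob C" and \<phi>: "\<phi> \<in> TA d"
  shows "\<phi> = (\<Sum>t\<in>J d. single t (\<phi> t))"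
proof
  fix x
  have "(\<Sum>t\<in>J d. single t (\<phi> t)) x = (\<Sum>t\<in>J d. if x = t then \<phi> t else 0)"
    by (simp add: fsum_apply single_def)
  also have "\<dots> = (if x \<in> J d then \<phi> x else 0)" using J_fin[OF d] by (simp add: sum.delta)
  also have "\<dots> = \<phi> x"
  proof (cases "x \<in> J d")
    case False
    obtain k f i where x: "x = (k, f, i)" by (cases x)
    have "\<phi> x = 0" using False \<phi> unfolding TA_mem x J_def by auto
    thus ?thesis using False by simp
  qed simp
  finally show "\<phi> x = (\<Sum>t\<in>J d. single t (\<phi> t)) x" by simp
qed

end


context tctx
begin

interpretation V: vector_space sc by (rule vs)
interpretation W: vector_space "fscale sc" by (rule vs_fscale[OF vs])

definition Sk where "Sk k = (SOME S. finite S \<and> S \<subseteq> Ob C \<and> (\<forall>c\<in>Ob C. cle C c (cs k) \<longrightarrow> (\<exists>s\<in>S. iso_obj C c s)))"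

lemma Sk: assumes k: "k < N"
  shows "finite (Sk k) \<and> Sk k \<subseteq> Ob C \<and> (\<forall>c\<in>Ob C. cle C c (cs k) \<longrightarrow> (\<exists>s\<in>Sk k. iso_obj C c s))"
proof -
  have "\<exists>S. finite S \<and> S \<subseteq> Ob C \<and> (\<forall>c\<in>Ob C. cle C c (cs k) \<longrightarrow> (\<exists>s\<in>S. iso_obj C c s))"
    using FI_isos0[OF FI] cs_Ob[OF k] by blast
  thus ?thesis unfolding Sk_def by (rule someI_ex)
qed

definition POP where "POP q1 q2 t \<longleftrightarrow> (case t of (z, g1, g2) \<Rightarrow> z \<in> Ob C \<and> g1 \<in> Hom C (Cod C q1) z \<and> g2 \<in> Hom C (Cod C q2) z \<and>
   (\<forall>z'\<in>Ob C. \<forall>h1\<in>Hom C (Cod C q1) z'. \<forall>h2\<in>Hom C (Cod C q2) z'. pullback_square C q1 q2 h1 h2 \<longrightarrow>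
      (\<exists>!u. u \<in> Hom C z z' \<and> Comp C u g1 = h1 \<and> Comp C u g2 = h2)))"

definition PO where "PO q1 q2 = (SOME t. POP q1 q2 t)"

lemma PO_ex: assumes q1: "q1 \<in> Hom C s c1" and q2: "q2 \<in> Hom C s c2" shows "POP q1 q2 (PO q1 q2)"
proof -
  have s: "s \<in> Ob C" and c1: "c1 \<in> Ob C" and c2: "c2 \<in> Ob C" and cod: "Cod C q1 = c1" "Cod C q2 = c2"
    using Hom_D[OF cat q1] Hom_D[OF cat q2] by auto
  obtain z g1 g2 where z: "z \<in> Ob C" and g1: "g1 \<in> Hom C c1 z" and g2: "g2 \<in> Hom C c2 z"
    and un: "\<forall>z'\<in>Ob C. \<forall>h1\<in>Hom C c1 z'. \<forall>h2\<in>Hom C c2 z'. pullback_square C q1 q2 h1 h2 \<longrightarrow>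
      (\<exists>!u. u \<in> Hom C z z' \<and> Comp C u g1 = h1 \<and> Comp C u g2 = h2)"
    using FI_po0[OF FI, rule_format, OF s c1 c2 q1 q2] by blast
  have "POP q1 q2 (z, g1, g2)" unfolding POP_def cod using z g1 g2 un by simp
  thus ?thesis unfolding PO_def by (rule someI)
qed

definition I where "I = Sigma {..<N} (\<lambda>k. Sigma {..<ns k} (\<lambda>i. Sigma E (\<lambda>e. Sigma (Sk k) (\<lambda>s. Hom C s (cs k) \<times> Hom C s (fst e)))))"

definition genf where "genf t = (case t of (k, i, e, s, q1, q2) \<Rightarrow> (case PO q1 q2 of (z, g1, g2) \<Rightarrow> (z, single (k, g1, i) (act g2 (snd e)))))"

definition GG where "GG = genf ` I"

lemma I_fin: "finite I"
proof -
  have h1: "finite (Sk k)" if "k \<in> {..<N}" for k using Sk that by simp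
  have h2: "finite (Hom C s (cs k) \<times> Hom C s (fst e))" if "k \<in> {..<N}" "e \<in> E" "s \<in> Sk k" for k e s
  proof -
    have sO: "s \<in> Ob C" using Sk that by auto
    have eO: "fst e \<in> Ob C" using E_sub that by auto
    have kO: "cs k \<in> Ob C" using cs_Ob that by simp
    show ?thesis using FI_fin[OF FI sO kO] FI_fin[OF FI sO eO] by simp
  qed
  show ?thesis unfolding I_def
    by (intro finite_SigmaI finite_lessThan E_fin h1 h2) auto
qed

lemma GG_fin: "finite GG" unfolding GG_def using I_fin by simp

lemma GG_A: assumes zx: "(z, x) \<in> GG" shows "z \<in> Ob C \<and> x \<in> TA z"
proof -
  obtain t where t: "t \<in> I" "genf t = (z, x)" using zx unfolding GG_def by auto
  obtain k i e s q1 q2 where tt: "t = (k, i, e, s, q1, q2)" by (cases t) auto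
  have k: "k < N" and i: "i < ns k" and e: "e \<in> E" and q1: "q1 \<in> Hom C s (cs k)" and q2: "q2 \<in> Hom C s (fst e)"
    using t(1) unfolding I_def tt by auto
  obtain z' g1 g2 where po: "PO q1 q2 = (z', g1, g2)" by (cases "PO q1 q2") auto
  have P: "POP q1 q2 (z', g1, g2)" using PO_ex[OF q1 q2] po by simp
  have cod: "Cod C q1 = cs k" "Cod C q2 = fst e" using Hom_D[OF cat q1] Hom_D[OF cat q2] by auto
  have z': "z' \<in> Ob C" and g1: "g1 \<in> Hom C (cs k) z'" and g2: "g2 \<in> Hom C (fst e) z'"
    using P unfolding POP_def cod by auto
  have "genf t = (z', single (k, g1, i) (act g2 (snd e)))" by (simp add: genf_def tt po)
  hence zx': "z = z'" "x = single (k, g1, i) (act g2 (snd e))" using t(2) by auto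
  have "snd e \<in> M (fst e)" using E_sub e by auto
  hence "act g2 (snd e) \<in> M z'" using mA[OF g2] by blast
  thus ?thesis using zx' z' single_TA[OF k g1 i] by simp
qed

lemma core:
  assumes k: "k < N" and i: "i < ns k" and f: "f \<in> Hom C (cs k) d" and e: "(ze, xe) \<in> E" and h: "h \<in> Hom C ze d"
  shows "\<exists>z x u. (z, x) \<in> GG \<and> u \<in> Hom C z d \<and> TAct u x = single (k, f, i) (act h xe)"
proof -
  have d: "d \<in> Ob C" and ck: "cs k \<in> Ob C" and zeO: "ze \<in> Ob C"
    using Hom_D[OF cat f] Hom_D[OF cat h] by auto
  have xe: "xe \<in> M ze" using E_sub e by auto
  obtain p p1 p2 where p: "p \<in> Ob C" and p1: "p1 \<in> Hom C p (cs k)" and p2: "p2 \<in> Hom C p ze"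
    and pb: "pullback_square C p1 p2 f h"
    using FI_pb0[OF FI, rule_format, OF ck zeO d f h] by blast
  have "cle C p (cs k)" using p1 by (auto simp: cle_def)
  then obtain s where s: "s \<in> Sk k" and iso: "iso_obj C p s" using Sk[OF k] p by blast
  obtain a b where a: "a \<in> Hom C p s" and b: "b \<in> Hom C s p" and ba: "Comp C b a = Idm C p" and ab: "Comp C a b = Idm C s"
    using iso unfolding iso_obj_def by blast
  define q1 where "q1 = Comp C p1 b"
  define q2 where "q2 = Comp C p2 b"
  have q1: "q1 \<in> Hom C s (cs k)" unfolding q1_def using comp_Hom[OF cat b p1] .
  have q2: "q2 \<in> Hom C s ze" unfolding q2_def using comp_Hom[OF cat b p2] .
  have pbq: "pullback_square C q1 q2 f h" unfolding q1_def q2_def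
    by (rule pb_iso[OF cat pb p1 p2 f h a b ba ab])
  have tI: "(k, i, (ze, xe), s, q1, q2) \<in> I" unfolding I_def using k i e s q1 q2 by auto
  obtain z g1 g2 where po: "PO q1 q2 = (z, g1, g2)" by (cases "PO q1 q2") auto
  have P: "POP q1 q2 (z, g1, g2)" using PO_ex[OF q1 q2] po by simp
  have cod: "Cod C q1 = cs k" "Cod C q2 = ze" using Hom_D[OF cat q1] Hom_D[OF cat q2] by auto
  have g1: "g1 \<in> Hom C (cs k) z" and g2: "g2 \<in> Hom C ze z"
    and un: "\<forall>z'\<in>Ob C. \<forall>h1\<in>Hom C (cs k) z'. \<forall>h2\<in>Hom C ze z'. pullback_square C q1 q2 h1 h2 \<longrightarrow>
      (\<exists>!u. u \<in> Hom C z z' \<and> Comp C u g1 = h1 \<and> Comp C u g2 = h2)"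
    using P unfolding POP_def cod by auto
  have "\<exists>!u. u \<in> Hom C z d \<and> Comp C u g1 = f \<and> Comp C u g2 = h"
    using un[rule_format, OF d f h pbq] .
  then obtain u where u: "u \<in> Hom C z d" "Comp C u g1 = f" "Comp C u g2 = h"
    by (elim ex1E) blast
  have ge: "genf (k, i, (ze, xe), s, q1, q2) = (z, single (k, g1, i) (act g2 xe))"
    by (simp add: genf_def po)
  have gen: "(z, single (k, g1, i) (act g2 xe)) \<in> GG"
    unfolding GG_def by (rule image_eqI[where f=genf, OF ge[symmetric] tI])
  have g2x: "act g2 xe \<in> M z" using mA[OF g2 xe] .
  have "TAct u (single (k, g1, i) (act g2 xe)) = single (k, Comp C u g1, i) (act u (act g2 xe))"
    by (rule tact_single[OF u(1) k i g1 g2x])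
  also have "act u (act g2 xe) = act h xe" using mComp[OF g2 u(1) xe] u(3) by simp
  finally have calc: "TAct u (single (k, g1, i) (act g2 xe)) = single (k, Comp C u g1, i) (act h xe)" .
  show ?thesis
    by (rule exI[of _ z], rule exI[of _ "single (k, g1, i) (act g2 xe)"], rule exI[of _ u])
       (simp add: gen u calc)
qed

lemma gen_T: assumes d: "d \<in> Ob C"
  shows "TA d \<subseteq> W.span {TAct u x | u x z. (z, x) \<in> GG \<and> u \<in> Hom C z d}"
proof
  let ?GS = "{TAct u x | u x z. (z, x) \<in> GG \<and> u \<in> Hom C z d}"
  fix \<phi> assume \<phi>: "\<phi> \<in> TA d"
  have each: "single t (\<phi> t) \<in> W.span ?GS" if t: "t \<in> J d" for t
  proof -
    obtain k f i where tt: "t = (k, f, i)" by (cases t)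
    have k: "k < N" and f: "f \<in> Hom C (cs k) d" and i: "i < ns k" using t unfolding tt J_def by auto
    have m: "\<phi> t \<in> M d" using \<phi> k f i unfolding TA_mem tt by blast
    let ?T = "{m \<in> M d. single t m \<in> W.span ?GS}"
    have sT: "V.subspace ?T"
    proof (rule V.subspaceI)
      have "single t (0::'v) = 0" by (simp add: single_def fun_eq_iff)
      thus "0 \<in> ?T" using m0[OF d] W.span_zero by simp
      show "x + y \<in> ?T" if "x \<in> ?T" "y \<in> ?T" for x y
        using that single_add[of t x y] W.span_add V.subspace_add[OF mSub[OF d]] by auto
      show "sc c x \<in> ?T" if "x \<in> ?T" for c x
        using that single_sc[of t c x] W.span_scale V.subspace_scale[OF mSub[OF d]] by auto
    qed
    have gens: "{act u x | u x z. (z, x) \<in> E \<and> u \<in> Hom C z d} \<subseteq> ?T"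
    proof
      fix y assume "y \<in> {act u x | u x z. (z, x) \<in> E \<and> u \<in> Hom C z d}"
      then obtain u x z where y: "y = act u x" "(z, x) \<in> E" "u \<in> Hom C z d" by blast
      obtain z' x' u' where c: "(z', x') \<in> GG" "u' \<in> Hom C z' d" "TAct u' x' = single (k, f, i) (act u x)"
        using core[OF k i f y(2) y(3)] by blast
      have "single t y \<in> ?GS" using c y(1) tt by force
      hence "single t y \<in> W.span ?GS" by (rule W.span_base)
      moreover have "y \<in> M d" using y E_sub mA by blast
      ultimately show "y \<in> ?T" by blast
    qed
    have "M d \<subseteq> ?T" using E_gen[OF d] V.span_minimal[OF gens sT] by (rule subset_trans)
    thus ?thesis using m by blast
  qed
  have "(\<Sum>t\<in>J d. single t (\<phi> t)) \<in> W.span ?GS" by (rule W.span_sum) (rule each)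
  thus "\<phi> \<in> W.span ?GS" using decomp[OF d \<phi>] by simp
qed

lemma partB: "coinv_stabilize C (fscale sc) TA TR TAct"
proof -
  interpret P: pmod "fscale sc" C TA TR TAct GG
  proof (rule pmod.intro[OF vs_fscale[OF vs]], rule pmod_axioms.intro)
    show "FI_type C" by (rule FI)
    show "c \<in> Ob C \<Longrightarrow> W.subspace (TA c)" for c by (rule TA_sub)
    show "c \<in> Ob C \<Longrightarrow> TR c \<subseteq> TA c" for c
    proof
      fix r assume c: "c \<in> Ob C" and r: "r \<in> TR c"
      obtain k f g j m where rr: "r = single (k, Comp C f g, j) m - (\<Sum>i < ns k. single (k, f, i) (sc (\<rho> k g i j) m))"
        and k: "k < N" and f: "f \<in> Hom C (cs k) c" and g: "g \<in> Aut C (cs k)" and j: "j < ns k" and m: "m \<in> M c"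
        using r unfolding tens_R_def by blast
      have fg: "Comp C f g \<in> Hom C (cs k) c" using comp_Hom[OF cat Aut_HomI[OF g] f] .
      have t1: "single (k, Comp C f g, j) m \<in> TA c" using single_TA[OF k fg j m] .
      have t2: "single (k, f, i) (sc (\<rho> k g i j) m) \<in> TA c" if "i \<in> {..<ns k}" for i
        using single_TA[OF k f _ V.subspace_scale[OF mSub[OF c] m]] that by simp
      have t3: "(\<Sum>i < ns k. single (k, f, i) (sc (\<rho> k g i j) m)) \<in> TA c"
        using W.subspace_sum[OF TA_sub[OF c] t2] .
      show "r \<in> TA c" unfolding rr using W.subspace_diff[OF TA_sub[OF c] t1 t3] .
    qed
    show "f \<in> Hom C c d \<Longrightarrow> x \<in> TA c \<Longrightarrow> TAct f x \<in> TA d" for f c d x by (rule tact_A)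
    show "f \<in> Hom C c d \<Longrightarrow> x \<in> TA c \<Longrightarrow> y \<in> TA c \<Longrightarrow> TAct f (x + y) = TAct f x + TAct f y" for f c d x y
      by (rule tact_add)
    show "f \<in> Hom C c d \<Longrightarrow> x \<in> TA c \<Longrightarrow> TAct f (fscale sc r x) = fscale sc r (TAct f x)" for f c d x r
      by (rule tact_scale)
    show "f \<in> Hom C c d \<Longrightarrow> x \<in> TR c \<Longrightarrow> TAct f x \<in> W.span (TR d)" for f c d x
      using tact_R W.span_base by blast
    show "f \<in> Hom C a b \<Longrightarrow> g \<in> Hom C b c \<Longrightarrow> x \<in> TA a \<Longrightarrow> TAct (Comp C g f) x = TAct g (TAct f x)" for f a b g c x
      by (rule tact_comp)
    show "finite GG" by (rule GG_fin)
    show "(z, x) \<in> GG \<Longrightarrow> z \<in> Ob C \<and> x \<in> TA z" for z x by (rule GG_A)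
    show "d \<in> Ob C \<Longrightarrow> TA d \<subseteq> W.span {TAct u x | u x z. (z, x) \<in> GG \<and> u \<in> Hom C z d}" for d
      by (rule gen_T)
  qed
  show ?thesis by (rule P.stabilize)
qed

end


theorem theoremD:
  fixes C :: "('o, 'm) cat"
    and sc :: "complex \<Rightarrow> 'v::ab_group_add \<Rightarrow> 'v"
    and M :: "'o \<Rightarrow> 'v set"
    and act :: "'m \<Rightarrow> 'v \<Rightarrow> 'v"
  assumes "vector_space sc"
    and "FI_type C"
    and "C_module C sc M act"
    and "fin_gen C sc M act"
  shows "coinv_stabilize C sc M (\<lambda>_. {}) act \<and>
         (\<forall>N cs ns \<rho>. free_data C N cs ns \<rho> \<longrightarrow>
            coinv_stabilize C (fscale sc) (tens_A C N cs ns M) (tens_R C sc N cs ns \<rho> M)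
              (tens_act C N cs ns act))"
proof (rule conjI)
  show "coinv_stabilize C sc M (\<lambda>_. {}) act" by (rule partA[OF assms])
  obtain E where E0: "finite E \<and> E \<subseteq> Sigma (Ob C) M \<and>
    (\<forall>N. submodule C sc M act N \<and> (\<forall>(c, x) \<in> E. x \<in> N c) \<longrightarrow> (\<forall>c \<in> Ob C. N c = M c))"
    using assms(4) unfolding fin_gen_def by (rule exE)
  note E = conjunct1[OF E0] conjunct1[OF conjunct2[OF E0]] conjunct2[OF conjunct2[OF E0]]
  have Eg: "\<And>d. d \<in> Ob C \<Longrightarrow> M d \<subseteq> module.span sc {act u x | u x z. (z, x) \<in> E \<and> u \<in> Hom C z d}"
    by (rule gen_M[OF assms(1,2,3) E])
  show "\<forall>N cs ns \<rho>. free_data C N cs ns \<rho> \<longrightarrow>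
            coinv_stabilize C (fscale sc) (tens_A C N cs ns M) (tens_R C sc N cs ns \<rho> M)
              (tens_act C N cs ns act)"
  proof (intro allI impI)
    fix N cs ns \<rho> assume fd: "free_data C N cs ns \<rho>"
    have T: "tctx C sc M act N cs ns \<rho> E"
      unfolding tctx_def using assms(1,2,3) fd E(1,2) Eg by blast
    show "coinv_stabilize C (fscale sc) (tens_A C N cs ns M) (tens_R C sc N cs ns \<rho> M) (tens_act C N cs ns act)"
      by (rule tctx.partB[OF T])
  qed
qed


end
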